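(* Assume the setting below. Let $u(t,x)$ be a solution of the mature-population equation that spreads with speed $c^*/T$, i.e. $\lim_{t\to\infty}\sup_{|x|\ge ct}u(t,x)=0$ for $c>c^*/T$ and $\lim_{t\to\infty}\sup_{|x|\le ct}|u(t,x)-\bar u(t)|=0$ for $c\in(0,c^*/T)$. Let $v$ be the solution of $$\partial_tv=D_I(t)\partial_{xx}v-d_I(t)v+b(t,u(t,x))-R\big(t,u(t-\tau(t),\cdot)\big)(x)$$ with a bounded initial value $v(0,\cdot)$. Then $\lim_{t\to+\infty}\sup_{|x|\ge ct}v(x,t)=0$ for every $c>c^*/T$, and $\lim_{t\to+\infty}\sup_{|x|\le ct}|v(x,t)-\bar v(t)|=0$ for every $c\in(0,c^*/T)$.
   Context: Setting: $T>0$; $D_M,D_I\ge0$, $d_M,d_I>0$, $\tau>0$, $p\ge0$ are $C^1$ $T$-periodic; $h\in C^1([0,\infty);[0,\infty))$; $b(t,u)=p(t)h(u)$; $0<\alpha\le\beta<t_\alpha\le t_\beta<T$ with $t_\alpha-\tau(t_\alpha)=\alpha$, $t_\beta-\tau(t_\beta)=\beta$, $p=0$ on $[0,\alpha]\cup[\beta,T]$; $\tau'<1$; $h(0)=0$, $h(z)\to0$ as $z\to\infty$, $h$ increasing on $[0,z^* )$ and decreasing on $[z^*,\infty)$; $h(\lambda z)\ge\lambda h(z)$, $\lambda\in(0,1)$; $L>1$; $h$ nondecreasing on $[0,u^*]$. $k_I,k_M$ are the Green functions of $\partial_t\rho=D_I(t)\rho_{xx}-d_I(t)\rho$, resp. with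 $D_M,d_M$. $R(t,\phi)(x)=(1-\tau'(t))(k_I(t,t-\tau(t),\cdot)*b(t-\tau(t),\phi))(x)$. The mature-population equation is $\partial_tu=D_M(t)u_{xx}-d_M(t)u+R(t,u(t-\tau(t),\cdot))(x)$, with solutions determined by $u(0,\cdot)$; $Q$ is its time-$T$ map, $u^*$ the minimal positive fixed point of $Q$ restricted to constants, $\bar u(t)$ the ($T$-periodic) solution with $u(0)\equiv u^*$, and $c^*>0$ the spreading speed of $Q$. $L=\frac{\overline{k}_M(T,0)}{1-\overline{k}_M(T,0)}\int_{t_\alpha}^{t_\beta}\frac{(1-\tau'(s))e^{-\int_{s-\tau(s)}^sd_I}p(s-\tau(s))h'(0)}{\overline{k}_M(s,s-\tau(s))}ds$ with $\overline{k}_M(t,s)=e^{-\int_s^td_M}$. $\bar v(t)$ is the unique nontrivial bounded $T$-periodic, spatially constant solution of the $v$-equation with $u\equiv\bar u(t)$; explicitly $\bar v(t)=\int_0^te^{-\int_s^td_I}\big[b(s,\bar u(s))-R(s,\bar u(s-\tau(s)))\big]ds$. *)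

theory Defs
  imports "HOL-Analysis.Analysis"
begin

definition C1 :: "(real \<Rightarrow> real) \<Rightarrow> bool" where
  "C1 f \<longleftrightarrow> (\<exists>f'. continuous_on UNIV f' \<and> (\<forall>t. (f has_real_derivative f' t) (at t)))"

definition periodic_with :: "real \<Rightarrow> (real \<Rightarrow> real) \<Rightarrow> bool" where
  "periodic_with T f \<longleftrightarrow> (\<forall>t. f (t + T) = f t)"

text \<open>Solution operator (convolution with the Green function k) of
  rho_t = D(t) rho_xx - d(t) rho from time s to time t, applied to phi.
  With A = int_s^t D, the Green function is the Gaussian
  exp(-int_s^t d) (4 pi A)^(-1/2) exp(-x^2/(4A)) if A > 0, and the
  Dirac mass exp(-int_s^t d) delta_0 if A = 0 (possible since D \<ge> 0).\<close>
definition Gop :: "(real \<Rightarrow> real) \<Rightarrow> (real \<Rightarrow> real) \<Rightarrow> real \<Rightarrow> real \<Rightarrow> (real \<Rightarrow> real) \<Rightarrow> real \<Rightarrow> real" where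
  "Gop D d t s \<phi> x =
     (let A = integral {s..t} D; e = exp (- integral {s..t} d) in
      if A > 0 then e * (LINT y|lborel. exp (- ((x - y)\<^sup>2) / (4 * A)) / sqrt (4 * pi * A) * \<phi> y)
      else e * \<phi> x)"

definition kbar :: "(real \<Rightarrow> real) \<Rightarrow> real \<Rightarrow> real \<Rightarrow> real" where
  "kbar d t s = exp (- integral {s..t} d)"

text \<open>R(t,phi)(x) = (1 - tau'(t)) (k_I(t,t-tau(t),.) * b(t-tau(t),phi))(x), b(t,u) = p(t) h(u).\<close>
definition Rop :: "(real \<Rightarrow> real) \<Rightarrow> (real \<Rightarrow> real) \<Rightarrow> (real \<Rightarrow> real) \<Rightarrow> (real \<Rightarrow> real)
     \<Rightarrow> (real \<Rightarrow> real) \<Rightarrow> real \<Rightarrow> (real \<Rightarrow> real) \<Rightarrow> real \<Rightarrow> real" where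
  "Rop DI dI \<tau> p h t \<phi> x =
     (1 - deriv \<tau> t) * Gop DI dI t (t - \<tau> t) (\<lambda>y. p (t - \<tau> t) * h (\<phi> y)) x"

text \<open>(Mild) solution on t \<ge> 0 of the mature-population equation
  u_t = D_M u_xx - d_M u + R(t, u(t - tau(t), .)), with bounded, continuous,
  nonnegative initial value u(0,.).\<close>
definition mature_sol :: "(real \<Rightarrow> real) \<Rightarrow> (real \<Rightarrow> real) \<Rightarrow> (real \<Rightarrow> real) \<Rightarrow> (real \<Rightarrow> real)
     \<Rightarrow> (real \<Rightarrow> real) \<Rightarrow> (real \<Rightarrow> real) \<Rightarrow> (real \<Rightarrow> real) \<Rightarrow> (real \<Rightarrow> real \<Rightarrow> real) \<Rightarrow> bool" where
  "mature_sol DM dM DI dI \<tau> p h u \<longleftrightarrow>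
     continuous_on ({0..} \<times> UNIV) (\<lambda>(t, x). u t x) \<and>
     (\<forall>x. 0 \<le> u 0 x) \<and>
     (\<forall>t\<ge>0. bounded ((\<lambda>(s, x). u s x) ` ({0..t} \<times> UNIV))) \<and>
     (\<forall>t\<ge>0. \<forall>x. u t x = Gop DM dM t 0 (u 0) x
        + integral {0..t} (\<lambda>s. Gop DM dM t s (Rop DI dI \<tau> p h s (u (s - \<tau> s))) x))"

text \<open>Time-T map Q restricted to constant initial values.\<close>
definition Qc :: "real \<Rightarrow> (real \<Rightarrow> real) \<Rightarrow> (real \<Rightarrow> real) \<Rightarrow> (real \<Rightarrow> real) \<Rightarrow> (real \<Rightarrow> real)
     \<Rightarrow> (real \<Rightarrow> real) \<Rightarrow> (real \<Rightarrow> real) \<Rightarrow> (real \<Rightarrow> real) \<Rightarrow> real \<Rightarrow> real" where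
  "Qc T DM dM DI dI \<tau> p h z =
     (THE y. \<exists>w. mature_sol DM dM DI dI \<tau> p h (\<lambda>t x. w t) \<and> w 0 = z \<and> w T = y)"

definition Lconst :: "real \<Rightarrow> (real \<Rightarrow> real) \<Rightarrow> (real \<Rightarrow> real) \<Rightarrow> (real \<Rightarrow> real) \<Rightarrow> (real \<Rightarrow> real)
     \<Rightarrow> real \<Rightarrow> real \<Rightarrow> real \<Rightarrow> real" where
  "Lconst T dM dI \<tau> p h'0 t\<alpha> t\<beta> =
     kbar dM T 0 / (1 - kbar dM T 0) *
     integral {t\<alpha>..t\<beta>} (\<lambda>s. (1 - deriv \<tau> s) * exp (- integral {s - \<tau> s..s} dI)
        * p (s - \<tau> s) * h'0 / kbar dM s (s - \<tau> s))"

definition vbar :: "(real \<Rightarrow> real) \<Rightarrow> (real \<Rightarrow> real) \<Rightarrow> (real \<Rightarrow> real) \<Rightarrow> (real \<Rightarrow> real)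
     \<Rightarrow> (real \<Rightarrow> real) \<Rightarrow> (real \<Rightarrow> real) \<Rightarrow> real \<Rightarrow> real" where
  "vbar DI dI \<tau> p h ub t =
     integral {0..t} (\<lambda>s. exp (- integral {s..t} dI) *
        (p s * h (ub s) - Rop DI dI \<tau> p h s (\<lambda>y. ub (s - \<tau> s)) 0))"

end

theory Submission
  imports Defs "HOL-Probability.Distributions" "HOL-Real_Asymp.Real_Asymp"
begin

lemma C1_cont: "C1 f \<Longrightarrow> continuous_on UNIV f"
proof -
  assume "C1 f"
  then obtain f' where d: "\<forall>t. (f has_real_derivative f' t) (at t)"
    unfolding C1_def by blast
  have "\<forall>t\<in>UNIV. isCont f t" using d DERIV_isCont by blast
  then show ?thesis by (rule continuous_at_imp_continuous_on)
qed

lemma C1_deriv_cont: "C1 f \<Longrightarrow> continuous_on UNIV (deriv f)"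
proof -
  assume "C1 f"
  then obtain f' where c: "continuous_on UNIV f'" and d: "\<forall>t. (f has_real_derivative f' t) (at t)"
    unfolding C1_def by blast
  have "deriv f = f'"
  proof
    fix t show "deriv f t = f' t" using d by (simp add: DERIV_imp_deriv)
  qed
  then show ?thesis using c by simp
qed

lemma periodic_nat: "periodic_with T f \<Longrightarrow> f (x + real n * T) = f x"
proof (induction n)
  case 0
  then show ?case by simp
next
  case (Suc n)
  have "f (x + real (Suc n) * T) = f ((x + real n * T) + T)" by (simp add: algebra_simps)
  also have "\<dots> = f (x + real n * T)" using Suc(2) unfolding periodic_with_def by blast
  finally show ?case using Suc by simp
qed

lemma periodic_int: "periodic_with T f \<Longrightarrow> f (x + real_of_int k * T) = f x"
proof (cases "k \<ge> 0")
  case True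
  assume p: "periodic_with T f"
  obtain n where "k = int n" using True nonneg_eq_int by blast
  then show ?thesis using periodic_nat[OF p] by simp
next
  case False
  assume p: "periodic_with T f"
  define n where "n = nat (-k)"
  have n: "k = - int n" using False unfolding n_def by simp
  have "f ((x - real n * T) + real n * T) = f (x - real n * T)" using periodic_nat[OF p] .
  then show ?thesis using n by simp
qed

lemma periodic_reduce:
  assumes "periodic_with T f" "T > 0"
  shows "\<exists>y\<in>{0..T}. f x = f y"
proof -
  define k where "k = \<lfloor>x / T\<rfloor>"
  have k1: "real_of_int k \<le> x / T" unfolding k_def by (rule of_int_floor_le)
  have k2: "x / T < real_of_int k + 1" unfolding k_def by (rule real_of_int_floor_add_one_gt)
  have a1: "real_of_int k * T \<le> x" using k1 assms(2) by (simp add: pos_le_divide_eq)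
  have a2: "x < (real_of_int k + 1) * T" using k2 assms(2) by (simp add: pos_divide_less_eq)
  have e: "(real_of_int k + 1) * T = real_of_int k * T + T" by (simp add: distrib_right)
  have h0: "f (x + real_of_int (-k) * T) = f x" using periodic_int[OF assms(1)] .
  have "x + real_of_int (-k) * T = x - real_of_int k * T" by simp
  then have h1: "f (x - real_of_int k * T) = f x" using h0 by simp
  have h2: "x - real_of_int k * T \<in> {0..T}" using a1 a2 e by simp
  show ?thesis using h1 h2 by (intro bexI[of _ "x - real_of_int k * T"]) auto
qed

lemma periodic_min_max:
  assumes "periodic_with T f" "T > 0" "continuous_on UNIV f"
  shows "\<exists>a b. (\<forall>x. f a \<le> f x) \<and> (\<forall>x. f x \<le> f b)"
proof -
  have c: "continuous_on {0..T} f" using assms(3) continuous_on_subset by blast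
  have ne: "{0..T} \<noteq> {}" using assms(2) by simp
  obtain a where a: "a \<in> {0..T}" "\<forall>y\<in>{0..T}. f a \<le> f y"
    using continuous_attains_inf[OF compact_Icc ne c] by blast
  obtain b where b: "b \<in> {0..T}" "\<forall>y\<in>{0..T}. f y \<le> f b"
    using continuous_attains_sup[OF compact_Icc ne c] by blast
  show ?thesis
  proof (intro exI conjI allI)
    fix x
    obtain y where y: "y \<in> {0..T}" "f x = f y" using periodic_reduce[OF assms(1,2)] by blast
    have "f a \<le> f y" using a(2) y(1) by blast
    then show "f a \<le> f x" using y(2) by linarith
  next
    fix x
    obtain y where y: "y \<in> {0..T}" "f x = f y" using periodic_reduce[OF assms(1,2)] by blast
    have "f y \<le> f b" using b(2) y(1) by blast
    then show "f x \<le> f b" using y(2) by linarith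
  qed
qed

definition Prim :: "(real \<Rightarrow> real) \<Rightarrow> real \<Rightarrow> real" where
  "Prim f x = integral {0..x} f - integral {x..0} f"

lemma integral_rev0: "b \<le> a \<Longrightarrow> integral {a..b} (f::real\<Rightarrow>real) = 0"
proof -
  assume "b \<le> a"
  then have "measure lborel (cbox a b) = 0" unfolding cbox_interval using content_real_eq_0 by blast
  then have "integral (cbox a b) f = 0" by (rule integral_null)
  then show ?thesis unfolding cbox_interval .
qed

lemma Prim_integral:
  assumes c: "continuous_on UNIV f" and ab: "a \<le> b"
  shows "integral {a..b} f = Prim f b - Prim f a"
proof -
  have I: "f integrable_on {x..y}" for x y
    by (meson c continuous_on_subset integrable_continuous_interval subset_UNIV)
  consider "0 \<le> a" | "a < 0" "0 \<le> b" | "b < 0" using ab by linarith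
  then show ?thesis
  proof cases
    case 1
    have "integral {0..a} f + integral {a..b} f = integral {0..b} f"
      using Henstock_Kurzweil_Integration.integral_combine[OF 1 ab I] .
    then show ?thesis using 1 ab unfolding Prim_def by (simp add: integral_rev0)
  next
    case 2
    have "integral {a..0} f + integral {0..b} f = integral {a..b} f"
      using Henstock_Kurzweil_Integration.integral_combine[of a 0 b f] 2 I by simp
    then show ?thesis using 2 unfolding Prim_def by (simp add: integral_rev0)
  next
    case 3
    have "integral {a..b} f + integral {b..0} f = integral {a..0} f"
      using Henstock_Kurzweil_Integration.integral_combine[of a b 0 f] 3 ab I by simp
    then show ?thesis using 3 ab unfolding Prim_def by (simp add: integral_rev0)
  qed
qed

lemma Prim_cont:
  assumes c: "continuous_on UNIV f"
  shows "continuous_on UNIV (Prim f)"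
proof (rule continuous_at_imp_continuous_on, intro ballI)
  fix x :: real
  define n where "n = \<bar>x\<bar> + 1"
  have c2: "continuous_on {-n..n} f" using continuous_on_subset[OF c] by blast
  have I: "f integrable_on {-n..n}" using integrable_continuous_interval[OF c2] .
  have co: "continuous_on {-n..n} (\<lambda>y. Prim f (-n) + integral {-n..y} f)"
    using continuous_on_add[OF continuous_on_const indefinite_integral_continuous_1[OF I]] .
  have eq: "Prim f (-n) + integral {-n..y} f = Prim f y" if "y \<in> {-n..n}" for y
  proof -
    have "-n \<le> y" using that by simp
    then have "integral {-n..y} f = Prim f y - Prim f (-n)" using Prim_integral[OF c] by blast
    then show ?thesis by linarith
  qed
  have co2: "continuous_on {-n..n} (Prim f)"
    using continuous_on_eq[OF co eq] .
  have "x \<in> {-n<..<n}" unfolding n_def by auto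
  then have "x \<in> interior {-n..n}" unfolding interior_atLeastAtMost_real .
  then show "isCont (Prim f) x" using continuous_on_interior[OF co2] by blast
qed

definition kern :: "real \<Rightarrow> real \<Rightarrow> real \<Rightarrow> real" where
  "kern A x y = exp (- ((x - y)\<^sup>2) / (4 * A)) / sqrt (4 * pi * A)"

lemma kern_normal:
  assumes "A > 0"
  shows "kern A x y = normal_density x (sqrt (2 * A)) y"
proof -
  have s: "(sqrt (2 * A))\<^sup>2 = 2 * A" using assms by simp
  have e: "(y - x)\<^sup>2 = (x - y)\<^sup>2" by (simp add: power2_commute)
  have "normal_density x (sqrt (2 * A)) y = 1 / sqrt (2 * pi * (2 * A)) * exp (- (x - y)\<^sup>2 / (2 * (2 * A)))"
    unfolding normal_density_def s e ..
  also have "\<dots> = kern A x y" unfolding kern_def by (simp add: field_simps)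
  finally show ?thesis by simp
qed

lemma kern_nonneg: "A > 0 \<Longrightarrow> kern A x y \<ge> 0"
  using kern_normal normal_density_nonneg by simp

lemma kern_integrable: "A > 0 \<Longrightarrow> integrable lborel (\<lambda>y. kern A x y)"
  using kern_normal[of A x] integrable_normal_density by simp

lemma kern_integral: "A > 0 \<Longrightarrow> (LINT y|lborel. kern A x y) = 1"
  using kern_normal[of A x] integral_normal_density by simp

lemma kern_mom_integrable: "A > 0 \<Longrightarrow> integrable lborel (\<lambda>y. kern A x y * (y - x)^2)"
  using kern_normal[of A x] integrable_normal_moment[where \<mu>=x and \<sigma>="sqrt (2*A)" and k=2] by simp

lemma kern_mom_integral: "A > 0 \<Longrightarrow> (LINT y|lborel. kern A x y * (y - x)^2) = 2 * A"
proof -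
  assume A: "A > 0"
  have "(LINT y|lborel. kern A x y * (y - x)^2) = (LINT y|lborel. normal_density x (sqrt (2 * A)) y * (y - x)^(2*1))"
    using kern_normal[OF A, of x] A by simp
  also have "\<dots> = fact (2 * 1) / ((2 / (sqrt (2 * A))\<^sup>2)^1 * fact 1)"
    by (rule integral_normal_moment_even) (use A in simp)
  also have "\<dots> = 2 * A"
  proof -
    have "(sqrt (2 * A))\<^sup>2 = 2 * A" using A by simp
    then show ?thesis by simp
  qed
  finally show ?thesis .
qed

lemma Gop_unfold: "Gop D d t s \<phi> x = (if integral {s..t} D > 0
   then exp (- integral {s..t} d) * (LINT y|lborel. kern (integral {s..t} D) x y * \<phi> y)
   else exp (- integral {s..t} d) * \<phi> x)"
  unfolding Gop_def Let_def kern_def by simp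

lemma A_nonneg:
  assumes "\<forall>t. D t \<ge> (0::real)"
  shows "0 \<le> integral {s..t} D"
proof (cases "D integrable_on {s..t}")
  case True
  then show ?thesis using Henstock_Kurzweil_Integration.integral_nonneg[OF True] assms by blast
next
  case False
  then show ?thesis using not_integrable_integral[OF False] by simp
qed

lemma Gop_nonneg:
  assumes "\<forall>y. \<phi> y \<ge> 0"
  shows "Gop D d t s \<phi> x \<ge> 0"
proof -
  have "0 \<le> (LINT y|lborel. kern A x y * \<phi> y)" if "A > 0" for A
    using kern_nonneg[OF that] assms by (intro integral_nonneg_AE) simp
  then show ?thesis unfolding Gop_unfold using assms by simp
qed

lemma LINT_bound:
  fixes f g :: "real \<Rightarrow> real"
  assumes g: "integrable lborel g" and fg: "\<And>y. \<bar>f y\<bar> \<le> g y"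
  shows "\<bar>LINT y|lborel. f y\<bar> \<le> (LINT y|lborel. g y)"
proof (cases "integrable lborel f")
  case True
  show ?thesis using Bochner_Integration.integral_norm_bound_integral[OF True g] fg by simp
next
  case False
  have "0 \<le> (LINT y|lborel. g y)" using fg by (intro integral_nonneg_AE) (auto intro: order_trans[OF abs_ge_zero])
  then show ?thesis using not_integrable_integral_eq[OF False] by simp
qed

lemma Gop_bound:
  assumes D: "\<forall>t. D t \<ge> 0" and M: "\<forall>y. \<bar>\<phi> y\<bar> \<le> M"
  shows "\<bar>Gop D d t s \<phi> x\<bar> \<le> exp (- integral {s..t} d) * M"
proof -
  define A where "A = integral {s..t} D"
  define E where "E = exp (- integral {s..t} d)"
  have E: "E > 0" unfolding E_def by simp
  show ?thesis
  proof (cases "A > 0")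
    case True
    have "\<bar>LINT y|lborel. kern A x y * \<phi> y\<bar> \<le> (LINT y|lborel. M * kern A x y)"
    proof (rule LINT_bound)
      show "integrable lborel (\<lambda>y. M * kern A x y)" using kern_integrable[OF True] by simp
      fix y
      have k: "kern A x y \<ge> 0" using kern_nonneg[OF True] .
      have "\<bar>kern A x y * \<phi> y\<bar> = kern A x y * \<bar>\<phi> y\<bar>" using k by (simp add: abs_mult)
      also have "\<dots> \<le> kern A x y * M" using k M by (simp add: mult_left_mono)
      finally show "\<bar>kern A x y * \<phi> y\<bar> \<le> M * kern A x y" by (simp add: mult.commute)
    qed
    also have "\<dots> = M" using kern_integral[OF True] by simp
    finally have "\<bar>E * (LINT y|lborel. kern A x y * \<phi> y)\<bar> \<le> E * M"
      using E by (simp add: abs_mult mult_left_mono)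
    then show ?thesis unfolding Gop_unfold using True unfolding A_def E_def by simp
  next
    case False
    have "\<bar>E * \<phi> x\<bar> \<le> E * M" using E M by (simp add: abs_mult mult_left_mono)
    then show ?thesis unfolding Gop_unfold using False unfolding A_def E_def by simp
  qed
qed

lemma Gop_local:
  assumes D: "\<forall>t. D t \<ge> 0" and M: "\<forall>y. \<bar>\<phi> y\<bar> \<le> M"
    and loc: "\<forall>y. \<bar>y - x\<bar> \<le> r \<longrightarrow> \<bar>\<phi> y\<bar> \<le> \<epsilon>" and r: "r > 0"
  shows "\<bar>Gop D d t s \<phi> x\<bar> \<le> exp (- integral {s..t} d) * (\<epsilon> + 2 * M * integral {s..t} D / r\<^sup>2)"
proof -
  define A where "A = integral {s..t} D"
  define E where "E = exp (- integral {s..t} d)"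
  have E: "E > 0" unfolding E_def by simp
  have A0: "A \<ge> 0" unfolding A_def using A_nonneg[OF D] .
  have M0: "M \<ge> 0" using M by (meson abs_ge_zero order_trans)
  have e0: "\<epsilon> \<ge> 0" using loc r by (metis abs_ge_zero order_trans abs_zero diff_self less_imp_le)
  have pw: "\<bar>\<phi> y\<bar> \<le> \<epsilon> + M * (y - x)\<^sup>2 / r\<^sup>2" for y
  proof (cases "\<bar>y - x\<bar> \<le> r")
    case True
    have "0 \<le> M * (y - x)\<^sup>2 / r\<^sup>2" using M0 by simp
    then show ?thesis using loc True by force
  next
    case False
    then have "r\<^sup>2 \<le> (y - x)\<^sup>2" using r by (metis abs_le_square_iff abs_of_pos le_cases less_imp_le power2_abs)
    then have "1 \<le> (y - x)\<^sup>2 / r\<^sup>2" using r by simp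
    then have "M \<le> M * (y - x)\<^sup>2 / r\<^sup>2" using M0 by (metis mult_left_mono mult.right_neutral times_divide_eq_right)
    then show ?thesis using M[rule_format, of y] e0 by linarith
  qed
  show ?thesis
  proof (cases "A > 0")
    case True
    have "\<bar>LINT y|lborel. kern A x y * \<phi> y\<bar> \<le> (LINT y|lborel. \<epsilon> * kern A x y + (M / r\<^sup>2) * (kern A x y * (y - x)\<^sup>2))"
    proof (rule LINT_bound)
      show "integrable lborel (\<lambda>y. \<epsilon> * kern A x y + (M / r\<^sup>2) * (kern A x y * (y - x)\<^sup>2))"
        using kern_integrable[OF True] kern_mom_integrable[OF True] by simp
      fix y
      have k: "kern A x y \<ge> 0" using kern_nonneg[OF True] .
      have "\<bar>kern A x y * \<phi> y\<bar> = kern A x y * \<bar>\<phi> y\<bar>" using k by (simp add: abs_mult)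
      also have "\<dots> \<le> kern A x y * (\<epsilon> + M * (y - x)\<^sup>2 / r\<^sup>2)" using k pw by (simp add: mult_left_mono)
      also have "\<dots> = \<epsilon> * kern A x y + (M / r\<^sup>2) * (kern A x y * (y - x)\<^sup>2)" by (simp add: field_simps)
      finally show "\<bar>kern A x y * \<phi> y\<bar> \<le> \<epsilon> * kern A x y + (M / r\<^sup>2) * (kern A x y * (y - x)\<^sup>2)" .
    qed
    also have "\<dots> = \<epsilon> * (LINT y|lborel. kern A x y) + (M / r\<^sup>2) * (LINT y|lborel. kern A x y * (y - x)\<^sup>2)"
      using kern_integrable[OF True] kern_mom_integrable[OF True] by simp
    also have "\<dots> = \<epsilon> + 2 * M * A / r\<^sup>2" using kern_integral[OF True] kern_mom_integral[OF True] by simp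
    finally have "\<bar>E * (LINT y|lborel. kern A x y * \<phi> y)\<bar> \<le> E * (\<epsilon> + 2 * M * A / r\<^sup>2)"
      using E by (simp add: abs_mult mult_left_mono)
    then show ?thesis unfolding Gop_unfold using True unfolding A_def E_def by simp
  next
    case False
    then have A: "A = 0" using A0 by simp
    have "\<bar>\<phi> x\<bar> \<le> \<epsilon>" using loc r by simp
    then have "\<bar>E * \<phi> x\<bar> \<le> E * (\<epsilon> + 2 * M * A / r\<^sup>2)" using E A by (simp add: abs_mult mult_left_mono)
    then show ?thesis unfolding Gop_unfold using False unfolding A_def E_def by simp
  qed
qed

lemma Gop_const:
  shows "Gop D d t s (\<lambda>y. c) x = exp (- integral {s..t} d) * c"
proof -
  have "(LINT y|lborel. kern A x y * c) = c" if "A > 0" for A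
    using kern_integral[OF that] by simp
  then show ?thesis unfolding Gop_unfold by simp
qed

lemma Gop_diff_const:
  assumes meas: "\<phi> \<in> borel_measurable borel" and M: "\<forall>y. \<bar>\<phi> y\<bar> \<le> M"
  shows "Gop D d t s \<phi> x - exp (- integral {s..t} d) * c = Gop D d t s (\<lambda>y. \<phi> y - c) x"
proof -
  have "(LINT y|lborel. kern A x y * \<phi> y) - c = (LINT y|lborel. kern A x y * (\<phi> y - c))" if A: "A > 0" for A
  proof -
    have i1: "integrable lborel (\<lambda>y. M * kern A x y)" using kern_integrable[OF A] by simp
    have i2: "integrable lborel (\<lambda>y. kern A x y * \<phi> y)"
    proof (rule Bochner_Integration.integrable_bound[OF i1])
      show "(\<lambda>y. kern A x y * \<phi> y) \<in> borel_measurable lborel"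
        using meas unfolding kern_def by measurable
      show "AE y in lborel. norm (kern A x y * \<phi> y) \<le> norm (M * kern A x y)"
      proof (rule AE_I2)
        fix y
        have k: "kern A x y \<ge> 0" using kern_nonneg[OF A] .
        have "\<bar>\<phi> y\<bar> \<le> \<bar>M\<bar>" using M[rule_format, of y] by linarith
        then have "\<bar>\<phi> y\<bar> * kern A x y \<le> \<bar>M\<bar> * kern A x y" using k by (rule mult_right_mono)
        then show "norm (kern A x y * \<phi> y) \<le> norm (M * kern A x y)" using k by (simp add: abs_mult mult.commute)
      qed
    qed
    have i3: "integrable lborel (\<lambda>y. c * kern A x y)" using kern_integrable[OF A] by simp
    have "(LINT y|lborel. kern A x y * (\<phi> y - c)) = (LINT y|lborel. kern A x y * \<phi> y - c * kern A x y)"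
      by (simp add: algebra_simps)
    also have "\<dots> = (LINT y|lborel. kern A x y * \<phi> y) - (LINT y|lborel. c * kern A x y)"
      using i2 i3 by simp
    also have "\<dots> = (LINT y|lborel. kern A x y * \<phi> y) - c" using kern_integral[OF A] by simp
    finally show ?thesis by simp
  qed
  then show ?thesis unfolding Gop_unfold by (simp add: algebra_simps)
qed

lemma C1_DERIV: "C1 f \<Longrightarrow> (f has_real_derivative deriv f x) (at x)"
proof -
  assume "C1 f"
  then obtain f' where d: "\<forall>t. (f has_real_derivative f' t) (at t)"
    unfolding C1_def by blast
  then have "deriv f x = f' x" by (simp add: DERIV_imp_deriv)
  then show ?thesis using d by simp
qed

lemma integral_nonneg_any:
  fixes f :: "real \<Rightarrow> real"
  assumes "\<And>x. x \<in> S \<Longrightarrow> 0 \<le> f x"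
  shows "0 \<le> integral S f"
proof (cases "f integrable_on S")
  case True
  then show ?thesis using Henstock_Kurzweil_Integration.integral_nonneg[OF True] assms by blast
next
  case False
  then show ?thesis using not_integrable_integral[OF False] by simp
qed

locale setting =
  fixes T \<alpha> \<beta> t\<alpha> t\<beta> cstar :: real
    and DM DI dM dI \<tau> p h h' ubar :: "real \<Rightarrow> real"
    and u v :: "real \<Rightarrow> real \<Rightarrow> real"
  assumes T_pos: "T > 0"
    and C1_coeffs: "C1 DM" "C1 DI" "C1 dM" "C1 dI" "C1 \<tau>" "C1 p"
    and periodic: "periodic_with T DM" "periodic_with T DI" "periodic_with T dM"
        "periodic_with T dI" "periodic_with T \<tau>" "periodic_with T p"
    and signs: "\<forall>t. DM t \<ge> 0" "\<forall>t. DI t \<ge> 0" "\<forall>t. dM t > 0" "\<forall>t. dI t > 0"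
        "\<forall>t. \<tau> t > 0" "\<forall>t. p t \<ge> 0"
    and h_C1: "continuous_on {0..} h'" "\<forall>z\<ge>0. (h has_real_derivative h' z) (at z within {0..})"
    and h_nonneg: "\<forall>z\<ge>0. h z \<ge> 0"
    and times: "0 < \<alpha>" "\<alpha> \<le> \<beta>" "\<beta> < t\<alpha>" "t\<alpha> \<le> t\<beta>" "t\<beta> < T"
        "t\<alpha> - \<tau> t\<alpha> = \<alpha>" "t\<beta> - \<tau> t\<beta> = \<beta>"
    and p_zero: "\<forall>t\<in>{0..\<alpha>} \<union> {\<beta>..T}. p t = 0"
    and tau_deriv: "\<forall>t. deriv \<tau> t < 1"
    and h0: "h 0 = 0"
    and h_lim: "(h \<longlongrightarrow> 0) at_top"
    and ubar: "mature_sol DM dM DI dI \<tau> p h (\<lambda>t x. ubar t)"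
        "periodic_with T ubar"
    and cstar: "cstar > 0"
    and u_sol: "mature_sol DM dM DI dI \<tau> p h u"
    and u_spread_out: "\<forall>c > cstar / T.
        ((\<lambda>t. Sup {u t x | x. c * t \<le> \<bar>x\<bar>}) \<longlongrightarrow> 0) at_top"
    and u_spread_in: "\<forall>c. 0 < c \<and> c < cstar / T \<longrightarrow>
        ((\<lambda>t. Sup {\<bar>u t x - ubar t\<bar> | x. \<bar>x\<bar> \<le> c * t}) \<longlongrightarrow> 0) at_top"
    and v0_bdd: "bounded (range (v 0))"
    and v0_meas: "v 0 \<in> borel_measurable borel"
    and v_sol: "\<forall>t\<ge>0. \<forall>x. v t x = Gop DI dI t 0 (v 0) x
        + integral {0..t} (\<lambda>s. Gop DI dI t s
            (\<lambda>y. p s * h (u s y) - Rop DI dI \<tau> p h s (u (s - \<tau> s)) y) x)"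
begin

lemma cont_DI: "continuous_on UNIV DI" using C1_cont[OF C1_coeffs(2)] .
lemma cont_dI: "continuous_on UNIV dI" using C1_cont[OF C1_coeffs(4)] .
lemma cont_tau: "continuous_on UNIV \<tau>" using C1_cont[OF C1_coeffs(5)] .
lemma cont_p: "continuous_on UNIV p" using C1_cont[OF C1_coeffs(6)] .
lemma cont_dtau: "continuous_on UNIV (deriv \<tau>)" using C1_deriv_cont[OF C1_coeffs(5)] .

lemma periodic_dtau: "periodic_with T (deriv \<tau>)"
  unfolding periodic_with_def
proof
  fix t
  have "((\<lambda>x. \<tau> (x + T)) has_real_derivative deriv \<tau> (t + T)) (at t)"
    using DERIV_chain2[OF C1_DERIV[OF C1_coeffs(5)] DERIV_add[OF DERIV_ident DERIV_const]] by simp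
  moreover have "(\<lambda>x. \<tau> (x + T)) = \<tau>" using periodic(5) unfolding periodic_with_def by simp
  ultimately have "(\<tau> has_real_derivative deriv \<tau> (t + T)) (at t)" by simp
  then show "deriv \<tau> (t + T) = deriv \<tau> t" using C1_DERIV[OF C1_coeffs(5)] DERIV_unique by blast
qed

lemma delta_ex: "\<exists>\<delta>>0. \<forall>t. dI t \<ge> \<delta>"
proof -
  obtain a where "\<forall>x. dI a \<le> dI x" using periodic_min_max[OF periodic(4) T_pos cont_dI] by blast
  then show ?thesis using signs(4) by blast
qed

lemma Dmax_ex: "\<exists>D. \<forall>t. DI t \<le> D"
  using periodic_min_max[OF periodic(2) T_pos cont_DI] by blast

lemma tau_bounds: "\<exists>a b. a > 0 \<and> (\<forall>t. a \<le> \<tau> t \<and> \<tau> t \<le> b)"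
proof -
  obtain a b where "\<forall>x. \<tau> a \<le> \<tau> x" "\<forall>x. \<tau> x \<le> \<tau> b" using periodic_min_max[OF periodic(5) T_pos cont_tau] by blast
  then show ?thesis using signs(5) by blast
qed

lemma p_max: "\<exists>P. \<forall>t. p t \<le> P"
  using periodic_min_max[OF periodic(6) T_pos cont_p] by blast

lemma dtau_bound: "\<exists>K. \<forall>t. \<bar>1 - deriv \<tau> t\<bar> \<le> K"
proof -
  obtain a where "\<forall>x. deriv \<tau> a \<le> deriv \<tau> x" using periodic_min_max[OF periodic_dtau T_pos cont_dtau] by blast
  then have "\<forall>t. \<bar>1 - deriv \<tau> t\<bar> \<le> 1 - deriv \<tau> a" using tau_deriv by (simp add: abs_le_iff) (smt (verit))
  then show ?thesis by blast
qed

lemma g_strict: "a < b \<Longrightarrow> a - \<tau> a < b - \<tau> b"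
proof -
  assume ab: "a < b"
  obtain z where z: "\<tau> b - \<tau> a = (b - a) * deriv \<tau> z"
    using MVT2[OF ab, of \<tau> "deriv \<tau>"] C1_DERIV[OF C1_coeffs(5)] by blast
  have "(b - a) * deriv \<tau> z < (b - a) * 1" using ab tau_deriv by (intro mult_strict_left_mono) auto
  then show ?thesis using z by simp
qed

lemma g_mono: "a \<le> b \<Longrightarrow> a - \<tau> a \<le> b - \<tau> b"
  using g_strict by (cases "a = b") (auto simp: order_le_less)

lemma p_hist: "s \<ge> 0 \<Longrightarrow> s - \<tau> s < 0 \<Longrightarrow> p (s - \<tau> s) = 0"
proof -
  assume s: "s \<ge> 0" "s - \<tau> s < 0"
  have "0 - \<tau> 0 \<le> s - \<tau> s" using g_mono[OF s(1)] .
  have t0: "\<tau> (0 + T) = \<tau> 0" using periodic(5) unfolding periodic_with_def by blast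
  have "t\<beta> - \<tau> t\<beta> < T - \<tau> T" using g_strict times(5) .
  then have "\<beta> - T < - \<tau> 0" using times(7) t0 by simp
  then have w: "\<beta> \<le> (s - \<tau> s) + T" "(s - \<tau> s) + T \<le> T" using \<open>0 - \<tau> 0 \<le> s - \<tau> s\<close> s(2) by linarith+
  have "p ((s - \<tau> s) + T) = p (s - \<tau> s)" using periodic(6) unfolding periodic_with_def by blast
  moreover have "p ((s - \<tau> s) + T) = 0" using p_zero w by auto
  ultimately show ?thesis by simp
qed


lemma Rop_nonneg:
  assumes "\<forall>y. 0 \<le> p (s - \<tau> s) * h (\<phi> y)"
  shows "0 \<le> Rop DI dI \<tau> p h s \<phi> x"
proof -
  have "0 \<le> 1 - deriv \<tau> s" using tau_deriv by (simp add: less_imp_le)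
  moreover have "0 \<le> Gop DI dI s (s - \<tau> s) (\<lambda>y. p (s - \<tau> s) * h (\<phi> y)) x"
    by (rule Gop_nonneg) (simp add: assms)
  ultimately show ?thesis unfolding Rop_def by simp
qed

lemma sol_nonneg:
  assumes sol: "mature_sol DM dM DI dI \<tau> p h w"
  shows "\<forall>t\<ge>0. \<forall>x. w t x \<ge> 0"
proof -
  obtain tmin tmax where tb: "tmin > 0" "\<forall>t. tmin \<le> \<tau> t \<and> \<tau> t \<le> tmax" using tau_bounds by blast
  have w0: "\<forall>x. 0 \<le> w 0 x" using sol unfolding mature_sol_def by blast
  have weq: "\<forall>t\<ge>0. \<forall>x. w t x = Gop DM dM t 0 (w 0) x
        + integral {0..t} (\<lambda>s. Gop DM dM t s (Rop DI dI \<tau> p h s (w (s - \<tau> s))) x)"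
    using sol unfolding mature_sol_def by blast
  have step: "\<forall>t. 0 \<le> t \<and> t \<le> real n * tmin \<longrightarrow> (\<forall>x. w t x \<ge> 0)" for n :: nat
  proof (induction n)
    case 0
    then show ?case using w0 by auto
  next
    case (Suc n)
    show ?case
    proof (intro allI impI)
      fix t x
      assume t: "0 \<le> t \<and> t \<le> real (Suc n) * tmin"
      have g1: "0 \<le> Gop DM dM t 0 (w 0) x" using Gop_nonneg w0 by blast
      have g2: "0 \<le> Gop DM dM t s (Rop DI dI \<tau> p h s (w (s - \<tau> s))) x" if s: "s \<in> {0..t}" for s
      proof -
        have "0 \<le> p (s - \<tau> s) * h (w (s - \<tau> s) y)" for y
        proof (cases "s - \<tau> s < 0")
          case True
          then show ?thesis using p_hist s by simp
        next
          case False
          have "s - \<tau> s \<le> real n * tmin" using s t tb by (simp add: algebra_simps) (smt (verit))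
          then have "0 \<le> w (s - \<tau> s) y" using Suc.IH False by simp
          then show ?thesis using h_nonneg signs(6) by simp
        qed
        then have "\<forall>y. 0 \<le> Rop DI dI \<tau> p h s (w (s - \<tau> s)) y" using Rop_nonneg by blast
        then show ?thesis using Gop_nonneg by blast
      qed
      have "0 \<le> integral {0..t} (\<lambda>s. Gop DM dM t s (Rop DI dI \<tau> p h s (w (s - \<tau> s))) x)"
        using g2 by (rule integral_nonneg_any)
      then show "0 \<le> w t x" using weq t g1 by simp
    qed
  qed
  show ?thesis
  proof (intro allI impI)
    fix t x :: real
    assume t: "t \<ge> 0"
    define n where "n = nat \<lceil>t / tmin\<rceil>"
    have "t / tmin \<le> real n" unfolding n_def by linarith
    then have "t \<le> real n * tmin" using tb(1) by (simp add: pos_divide_le_eq)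
    then show "w t x \<ge> 0" using step t by blast
  qed
qed

lemma h_cont: "continuous_on {0..} h"
  unfolding continuous_on_eq_continuous_within
  using h_C1(2) DERIV_continuous by blast

lemma h_bound: "\<exists>H. \<forall>z\<ge>0. h z \<le> H"
proof -
  have "eventually (\<lambda>z. dist (h z) 0 < 1) at_top" using h_lim tendstoD by fastforce
  then obtain Z where Z: "\<forall>z\<ge>Z. dist (h z) 0 < 1" unfolding eventually_at_top_linorder by blast
  define Z' where "Z' = max Z 0"
  have c: "continuous_on {0..Z'} h" using h_cont continuous_on_subset by fastforce
  have ne: "{0..Z'} \<noteq> {}" unfolding Z'_def by simp
  obtain b where b: "b \<in> {0..Z'}" "\<forall>y\<in>{0..Z'}. h y \<le> h b"
    using continuous_attains_sup[OF compact_Icc ne c] by blast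
  have "\<forall>z\<ge>0. h z \<le> max (h b) 1"
  proof (intro allI impI)
    fix z :: real assume z: "z \<ge> 0"
    show "h z \<le> max (h b) 1"
    proof (cases "z \<le> Z'")
      case True
      then have "h z \<le> h b" using b(2) z by simp
      then show ?thesis by simp
    next
      case False
      then have "dist (h z) 0 < 1" using Z unfolding Z'_def by simp
      then show ?thesis by (simp add: dist_real_def)
    qed
  qed
  then show ?thesis by blast
qed

lemma h_unif: "e > 0 \<Longrightarrow> \<exists>d>0. \<forall>z\<in>{0..K}. \<forall>z'\<in>{0..K}. \<bar>z' - z\<bar> < d \<longrightarrow> \<bar>h z' - h z\<bar> < e"
proof -
  assume e: "e > 0"
  have c: "continuous_on {0..K} h" using h_cont continuous_on_subset by fastforce
  have "uniformly_continuous_on {0..K} h" using compact_uniformly_continuous[OF c compact_Icc] .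
  then show ?thesis unfolding uniformly_continuous_on_def dist_real_def using e by blast
qed

end

lemma exp_integral:
  fixes \<delta> t :: real
  assumes d: "\<delta> > 0" and t: "0 \<le> t"
  shows "((\<lambda>s. exp (- \<delta> * (t - s))) has_integral (1 - exp (- \<delta> * t)) / \<delta>) {0..t}"
proof -
  define F where "F = (\<lambda>s. exp (- \<delta> * (t - s)) / \<delta>)"
  have D: "(F has_vector_derivative exp (- \<delta> * (t - x))) (at x within {0..t})" for x
  proof -
    have "(F has_real_derivative (exp (- \<delta> * (t - x)) * \<delta>) / \<delta>) (at x within {0..t})"
      unfolding F_def by (auto intro!: derivative_eq_intros)
    then show ?thesis
      using d by (simp add: has_real_derivative_iff_has_vector_derivative)
  qed
  have "((\<lambda>s. exp (- \<delta> * (t - s))) has_integral (F t - F 0)) {0..t}"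
    using fundamental_theorem_of_calculus[of 0 t F "\<lambda>x. exp (- \<delta> * (t - x))"] t D by blast
  then show ?thesis unfolding F_def by (simp add: diff_divide_distrib)
qed

lemma int_exp_bound:
  fixes g :: "real \<Rightarrow> real" and \<delta> t a c :: real
  assumes d: "\<delta> > 0" and t: "t \<ge> 0" and a: "a \<ge> 0" and c: "c \<ge> 0"
    and g: "\<And>s. s \<in> {0..t} \<Longrightarrow> \<bar>g s\<bar> \<le> exp (- \<delta> * (t - s)) * a + c"
  shows "\<bar>integral {0..t} g\<bar> \<le> a / \<delta> + c * t"
proof -
  define b where "b = (\<lambda>s. exp (- \<delta> * (t - s)) * a + c)"
  have hb: "(b has_integral ((1 - exp (- \<delta> * t)) / \<delta> * a + c * t)) {0..t}"
  proof -
    have "((\<lambda>s. exp (- \<delta> * (t - s)) * a) has_integral ((1 - exp (- \<delta> * t)) / \<delta> * a)) {0..t}"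
      using has_integral_mult_left[OF exp_integral[OF d t]] .
    moreover have "((\<lambda>s. c) has_integral c * t) {0..t}"
      using has_integral_const_real[of c 0 t] t by (simp add: mult.commute)
    ultimately show ?thesis unfolding b_def by (rule has_integral_add)
  qed
  have ib: "b integrable_on {0..t}" using hb by blast
  have "\<bar>integral {0..t} g\<bar> \<le> integral {0..t} b"
  proof (cases "g integrable_on {0..t}")
    case True
    show ?thesis using Henstock_Kurzweil_Integration.integral_norm_bound_integral[OF True ib] g unfolding b_def by simp
  next
    case False
    have "0 \<le> integral {0..t} b" using a c unfolding b_def by (intro integral_nonneg_any) simp
    then show ?thesis using not_integrable_integral[OF False] by simp
  qed
  also have "\<dots> = (1 - exp (- \<delta> * t)) / \<delta> * a + c * t" using hb by (rule integral_unique)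
  also have "\<dots> \<le> a / \<delta> + c * t"
  proof -
    have "(1 - exp (- \<delta> * t)) / \<delta> \<le> 1 / \<delta>" using d by (simp add: divide_right_mono)
    then have "(1 - exp (- \<delta> * t)) / \<delta> * a \<le> 1 / \<delta> * a" using a by (rule mult_right_mono)
    then show ?thesis by simp
  qed
  finally show ?thesis .
qed

lemma xexp_le: "x \<ge> 0 \<Longrightarrow> x * exp (- x) \<le> (1::real)"
proof -
  assume "x \<ge> 0"
  have "x \<le> exp x" using exp_ge_add_one_self[of x] by linarith
  then have "x * exp (- x) \<le> exp x * exp (- x)" by (simp add: mult_right_mono)
  also have "\<dots> = 1" by (simp add: exp_minus)
  finally show ?thesis .
qed

context setting begin

lemma E_le1: "exp (- integral {s..t} dI) \<le> 1"
proof -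
  have "\<forall>t. 0 \<le> dI t" using signs(4) by (simp add: less_imp_le)
  then have "0 \<le> integral {s..t} dI" by (rule A_nonneg)
  then show ?thesis by simp
qed

lemma E_le_exp:
  assumes d: "\<forall>t. dI t \<ge> \<delta>" and st: "s \<le> t"
  shows "exp (- integral {s..t} dI) \<le> exp (- \<delta> * (t - s))"
proof -
  have i: "dI integrable_on {s..t}" by (meson cont_dI continuous_on_subset integrable_continuous_interval subset_UNIV)
  have "integral {s..t} (\<lambda>x. \<delta>) \<le> integral {s..t} dI"
    by (rule integral_le) (use i d in auto)
  then have "\<delta> * (t - s) \<le> integral {s..t} dI" using st by (simp add: mult.commute)
  then show ?thesis by simp
qed

lemma A_le:
  assumes d: "\<forall>t. DI t \<le> Dm" and st: "s \<le> t"
  shows "integral {s..t} DI \<le> Dm * (t - s)"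
proof -
  have i: "DI integrable_on {s..t}" by (meson cont_DI continuous_on_subset integrable_continuous_interval subset_UNIV)
  have "integral {s..t} DI \<le> integral {s..t} (\<lambda>x. Dm)"
    by (rule integral_le) (use i d in auto)
  then show ?thesis using st by (simp add: mult.commute)
qed

lemma sol_bdd_time:
  assumes sol: "mature_sol DM dM DI dI \<tau> p h w" and t: "t \<ge> 0"
  shows "\<exists>B. \<forall>x. \<bar>w t x\<bar> \<le> B"
proof -
  have "bounded ((\<lambda>(s, x). w s x) ` ({0..t} \<times> UNIV))" using sol t unfolding mature_sol_def by blast
  then obtain B where B: "\<forall>z\<in>((\<lambda>(s, x). w s x) ` ({0..t} \<times> UNIV)). norm z \<le> B" unfolding bounded_iff by blast
  have "\<bar>w t x\<bar> \<le> B" for x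
  proof -
    have "(t, x) \<in> {0..t} \<times> UNIV" using t by simp
    then have "w t x \<in> ((\<lambda>(s, x). w s x) ` ({0..t} \<times> UNIV))" by force
    then show ?thesis using B by fastforce
  qed
  then show ?thesis by blast
qed

lemma u_nonneg: "t \<ge> 0 \<Longrightarrow> u t x \<ge> 0" using sol_nonneg[OF u_sol] by blast

lemma ubar_nonneg: "t \<ge> 0 \<Longrightarrow> ubar t \<ge> 0" using sol_nonneg[OF ubar(1)] by blast

lemma F_bound:
  assumes sol: "mature_sol DM dM DI dI \<tau> p h w" and s: "s \<ge> 0"
    and P: "\<forall>t. p t \<le> P" and H: "\<forall>z\<ge>0. h z \<le> H" and K: "\<forall>t. \<bar>1 - deriv \<tau> t\<bar> \<le> K"
  shows "\<bar>p s * h (w s y) - Rop DI dI \<tau> p h s (w (s - \<tau> s)) y\<bar> \<le> P * H + K * (P * H)"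
proof -
  have wn: "\<forall>t\<ge>0. \<forall>x. w t x \<ge> 0" using sol_nonneg[OF sol] .
  have ph: "\<bar>p r * h (w r z)\<bar> \<le> P * H" if "r \<ge> 0" for r z
  proof -
    have "0 \<le> w r z" using wn that by blast
    then have "0 \<le> h (w r z)" "h (w r z) \<le> H" using h_nonneg H by auto
    moreover have "0 \<le> p r" "p r \<le> P" using signs(6) P by auto
    ultimately show ?thesis by (simp add: abs_mult mult_mono)
  qed
  have inner: "\<forall>z. \<bar>p (s - \<tau> s) * h (w (s - \<tau> s) z)\<bar> \<le> P * H"
  proof
    fix z show "\<bar>p (s - \<tau> s) * h (w (s - \<tau> s) z)\<bar> \<le> P * H"
    proof (cases "s - \<tau> s < 0")
      case True
      have "0 \<le> P * H" using ph[OF s, of y] by linarith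
      then show ?thesis using p_hist[OF s True] by simp
    next
      case False
      then show ?thesis using ph by simp
    qed
  qed
  have "\<bar>Gop DI dI s (s - \<tau> s) (\<lambda>z. p (s - \<tau> s) * h (w (s - \<tau> s) z)) y\<bar> \<le> exp (- integral {s - \<tau> s..s} dI) * (P * H)"
    using Gop_bound[OF signs(2) inner] .
  also have "\<dots> \<le> P * H"
  proof -
    have "0 \<le> P * H" using ph[OF s, of y] by linarith
    then show ?thesis using E_le1[of "s - \<tau> s" s] by (simp add: mult_left_le_one_le)
  qed
  finally have G: "\<bar>Gop DI dI s (s - \<tau> s) (\<lambda>z. p (s - \<tau> s) * h (w (s - \<tau> s) z)) y\<bar> \<le> P * H" .
  have "\<bar>Rop DI dI \<tau> p h s (w (s - \<tau> s)) y\<bar> \<le> K * (P * H)"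
    unfolding Rop_def abs_mult
  proof (rule mult_mono)
    show "\<bar>1 - deriv \<tau> s\<bar> \<le> K" using K by blast
    show "0 \<le> K" using K by (meson abs_ge_zero order_trans)
  qed (use G in auto)
  then show ?thesis using ph[OF s, of y] by linarith
qed

end

lemma kern_meas:
  assumes [measurable]: "A \<in> borel_measurable M" "Y \<in> borel_measurable M" "Z \<in> borel_measurable M"
  shows "(\<lambda>w. kern (A w) (Y w) (Z w)) \<in> borel_measurable M"
  unfolding kern_def by measurable

lemma meas_pair_int:
  fixes A :: "real \<Rightarrow> real" and q :: "real \<times> real \<Rightarrow> real"
  assumes cA: "A \<in> borel_measurable borel" and cq: "q \<in> borel_measurable (borel \<Otimes>\<^sub>M borel)"
  shows "(\<lambda>sy. LINT z|lborel. kern (A (fst sy)) (snd sy) z * q (fst sy, z)) \<in> borel_measurable (borel \<Otimes>\<^sub>M borel)"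
proof -
  have [measurable]: "A \<in> borel_measurable borel" using cA .
  have q[measurable]: "q \<in> borel_measurable (borel \<Otimes>\<^sub>M borel)" using cq .
  have "(\<lambda>(sy, z). kern (A (fst sy)) (snd sy) z * q (fst sy, z)) \<in> borel_measurable ((borel \<Otimes>\<^sub>M borel) \<Otimes>\<^sub>M lborel)"
    by (measurable; (rule kern_meas)?; measurable)
  then show ?thesis by (rule lborel.borel_measurable_lebesgue_integral[of "\<lambda>sy z. kern (A (fst sy)) (snd sy) z * q (fst sy, z)", simplified])
qed

lemma meas_int:
  fixes A :: "real \<Rightarrow> real" and q :: "real \<times> real \<Rightarrow> real"
  assumes cA: "A \<in> borel_measurable borel" and cq: "q \<in> borel_measurable (borel \<Otimes>\<^sub>M borel)"
  shows "(\<lambda>s. LINT y|lborel. kern (A s) x y * q (s, y)) \<in> borel_measurable borel"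
proof -
  have [measurable]: "A \<in> borel_measurable borel" using cA .
  have q[measurable]: "q \<in> borel_measurable (borel \<Otimes>\<^sub>M borel)" using cq .
  have "(\<lambda>(s, y). kern (A s) x y * q (s, y)) \<in> borel_measurable (borel \<Otimes>\<^sub>M borel)"
    by (measurable; (rule kern_meas)?; measurable)
  then have "(\<lambda>(s, y). kern (A s) x y * q (s, y)) \<in> borel_measurable (borel \<Otimes>\<^sub>M lborel)"
    by (simp cong: measurable_cong_sets[OF sets_pair_measure_cong[OF refl sets_lborel] refl])
  then show ?thesis by (rule lborel.borel_measurable_lebesgue_integral[of "\<lambda>s y. kern (A s) x y * q (s, y)", simplified])
qed

lemma cont_meas2: "continuous_on UNIV (q :: real \<times> real \<Rightarrow> real) \<Longrightarrow> q \<in> borel_measurable (borel \<Otimes>\<^sub>M borel)"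
  using borel_measurable_continuous_onI borel_prod by metis

context setting begin

definition hh :: "real \<Rightarrow> real" where "hh z = h (max z 0)"
definition wt :: "(real \<Rightarrow> real \<Rightarrow> real) \<Rightarrow> real \<times> real \<Rightarrow> real" where "wt w = (\<lambda>(s, y). w (max s 0) y)"
definition psi :: "(real \<Rightarrow> real \<Rightarrow> real) \<Rightarrow> real \<times> real \<Rightarrow> real" where
  "psi w = (\<lambda>(s, z). p (s - \<tau> s) * hh (wt w (s - \<tau> s, z)))"
definition Ap :: "real \<Rightarrow> real" where "Ap s = Prim DI s - Prim DI (s - \<tau> s)"
definition Ep :: "real \<Rightarrow> real" where "Ep s = exp (- (Prim dI s - Prim dI (s - \<tau> s)))"
definition Gt :: "(real \<Rightarrow> real \<Rightarrow> real) \<Rightarrow> real \<times> real \<Rightarrow> real" where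
  "Gt w = (\<lambda>(s, y). if Ap s > 0 then Ep s * (LINT z|lborel. kern (Ap s) y z * psi w (s, z)) else Ep s * psi w (s, y))"
definition Ft :: "(real \<Rightarrow> real \<Rightarrow> real) \<Rightarrow> real \<times> real \<Rightarrow> real" where
  "Ft w = (\<lambda>(s, y). p s * hh (wt w (s, y)) - (1 - deriv \<tau> s) * Gt w (s, y))"
definition gt :: "(real \<Rightarrow> real \<Rightarrow> real) \<Rightarrow> real \<Rightarrow> real \<Rightarrow> real \<Rightarrow> real" where
  "gt w t x s = (if Prim DI t - Prim DI s > 0
     then exp (- (Prim dI t - Prim dI s)) * (LINT y|lborel. kern (Prim DI t - Prim DI s) x y * Ft w (s, y))
     else exp (- (Prim dI t - Prim dI s)) * Ft w (s, x))"
definition Fw :: "(real \<Rightarrow> real \<Rightarrow> real) \<Rightarrow> real \<Rightarrow> real \<Rightarrow> real" where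
  "Fw w s y = p s * h (w s y) - Rop DI dI \<tau> p h s (w (s - \<tau> s)) y"

lemma hh_cont: "continuous_on UNIV hh"
proof -
  have "continuous_on UNIV (\<lambda>z. h (max z 0))"
    by (rule continuous_on_compose2[OF h_cont]) (auto intro!: continuous_intros)
  then show ?thesis unfolding hh_def by simp
qed

lemma wt_cont:
  assumes sol: "mature_sol DM dM DI dI \<tau> p h w"
  shows "continuous_on UNIV (wt w)"
proof -
  have c: "continuous_on ({0..} \<times> UNIV) (\<lambda>(t, x). w t x)" using sol unfolding mature_sol_def by blast
  have c2: "continuous_on UNIV (\<lambda>q. (\<lambda>(t, x). w t x) (max (fst q) 0, snd q))"
    by (rule continuous_on_compose2[OF c]) (auto intro!: continuous_intros)
  have e: "wt w = (\<lambda>q. (\<lambda>(t, x). w t x) (max (fst q) 0, snd q))" unfolding wt_def by auto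
  show ?thesis unfolding e using c2 .
qed

lemma g_cont: "continuous_on UNIV (\<lambda>s. s - \<tau> s)"
  using cont_tau by (auto intro!: continuous_intros)

lemma psi_cont:
  assumes sol: "mature_sol DM dM DI dI \<tau> p h w"
  shows "continuous_on UNIV (psi w)"
proof -
  have c1: "continuous_on UNIV (\<lambda>q::real\<times>real. p (fst q - \<tau> (fst q)))"
    by (rule continuous_on_compose2[OF cont_p]) (auto intro!: continuous_intros continuous_on_compose2[OF cont_tau])
  have c2: "continuous_on UNIV (\<lambda>q::real\<times>real. wt w (fst q - \<tau> (fst q), snd q))"
    by (rule continuous_on_compose2[OF wt_cont[OF sol]]) (auto intro!: continuous_intros continuous_on_compose2[OF cont_tau])
  have c3: "continuous_on UNIV (\<lambda>q::real\<times>real. hh (wt w (fst q - \<tau> (fst q), snd q)))"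
    by (rule continuous_on_compose2[OF hh_cont c2]) auto
  have c4: "continuous_on UNIV (\<lambda>q::real\<times>real. p (fst q - \<tau> (fst q)) * hh (wt w (fst q - \<tau> (fst q), snd q)))"
    using c1 c3 by (rule continuous_on_mult)
  have e: "psi w = (\<lambda>q::real\<times>real. p (fst q - \<tau> (fst q)) * hh (wt w (fst q - \<tau> (fst q), snd q)))"
    unfolding psi_def by auto
  show ?thesis unfolding e using c4 .
qed

lemma Ap_meas: "Ap \<in> borel_measurable borel"
proof -
  have "continuous_on UNIV Ap" unfolding Ap_def
    by (intro continuous_intros Prim_cont[OF cont_DI] continuous_on_compose2[OF Prim_cont[OF cont_DI] g_cont]) auto
  then show ?thesis by (rule borel_measurable_continuous_onI)
qed

lemma Ep_meas: "Ep \<in> borel_measurable borel"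
proof -
  have "continuous_on UNIV Ep" unfolding Ep_def
    by (intro continuous_intros Prim_cont[OF cont_dI] continuous_on_compose2[OF Prim_cont[OF cont_dI] g_cont]) auto
  then show ?thesis by (rule borel_measurable_continuous_onI)
qed

lemma Gt_meas:
  assumes sol: "mature_sol DM dM DI dI \<tau> p h w"
  shows "Gt w \<in> borel_measurable (borel \<Otimes>\<^sub>M borel)"
proof -
  have [measurable]: "Ap \<in> borel_measurable borel" "Ep \<in> borel_measurable borel" using Ap_meas Ep_meas .
  have [measurable]: "psi w \<in> borel_measurable (borel \<Otimes>\<^sub>M borel)" using cont_meas2[OF psi_cont[OF sol]] .
  have [measurable]: "(\<lambda>sy. LINT z|lborel. kern (Ap (fst sy)) (snd sy) z * psi w (fst sy, z)) \<in> borel_measurable (borel \<Otimes>\<^sub>M borel)"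
    by (rule meas_pair_int) measurable
  have "(\<lambda>sy. if Ap (fst sy) > 0 then Ep (fst sy) * (LINT z|lborel. kern (Ap (fst sy)) (snd sy) z * psi w (fst sy, z))
        else Ep (fst sy) * psi w (fst sy, snd sy)) \<in> borel_measurable (borel \<Otimes>\<^sub>M borel)"
    by measurable
  moreover have "(\<lambda>sy. if Ap (fst sy) > 0 then Ep (fst sy) * (LINT z|lborel. kern (Ap (fst sy)) (snd sy) z * psi w (fst sy, z))
        else Ep (fst sy) * psi w (fst sy, snd sy)) = Gt w" unfolding Gt_def by auto
  ultimately show ?thesis by simp
qed

lemma Ft_meas:
  assumes sol: "mature_sol DM dM DI dI \<tau> p h w"
  shows "Ft w \<in> borel_measurable (borel \<Otimes>\<^sub>M borel)"
proof -
  have [measurable]: "Gt w \<in> borel_measurable (borel \<Otimes>\<^sub>M borel)" using Gt_meas[OF sol] .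
  have [measurable]: "(\<lambda>sy. p (fst sy) * hh (wt w sy)) \<in> borel_measurable (borel \<Otimes>\<^sub>M borel)"
    by (rule cont_meas2) (intro continuous_intros continuous_on_compose2[OF cont_p] continuous_on_compose2[OF hh_cont wt_cont[OF sol]]; auto)
  have [measurable]: "deriv \<tau> \<in> borel_measurable borel" using borel_measurable_continuous_onI[OF cont_dtau] .
  have "(\<lambda>sy. p (fst sy) * hh (wt w sy) - (1 - deriv \<tau> (fst sy)) * Gt w sy) \<in> borel_measurable (borel \<Otimes>\<^sub>M borel)"
    by measurable
  moreover have "(\<lambda>sy. p (fst sy) * hh (wt w sy) - (1 - deriv \<tau> (fst sy)) * Gt w sy) = Ft w" unfolding Ft_def by auto
  ultimately show ?thesis by simp
qed

lemma gt_meas: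
  assumes sol: "mature_sol DM dM DI dI \<tau> p h w"
  shows "gt w t x \<in> borel_measurable borel"
proof -
  have [measurable]: "Ft w \<in> borel_measurable (borel \<Otimes>\<^sub>M borel)" using Ft_meas[OF sol] .
  have cD: "continuous_on UNIV (\<lambda>s. Prim DI t - Prim DI s)" by (intro continuous_intros Prim_cont[OF cont_DI])
  have cd: "continuous_on UNIV (\<lambda>s. Prim dI t - Prim dI s)" by (intro continuous_intros Prim_cont[OF cont_dI])
  have [measurable]: "(\<lambda>s. Prim DI t - Prim DI s) \<in> borel_measurable borel" using borel_measurable_continuous_onI[OF cD] .
  have [measurable]: "(\<lambda>s. Prim dI t - Prim dI s) \<in> borel_measurable borel" using borel_measurable_continuous_onI[OF cd] .
  have [measurable]: "(\<lambda>s. LINT y|lborel. kern (Prim DI t - Prim DI s) x y * Ft w (s, y)) \<in> borel_measurable borel"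
    by (rule meas_int) measurable
  have [measurable]: "(\<lambda>s. Ft w (s, x)) \<in> borel_measurable borel" by measurable
  show ?thesis unfolding gt_def by measurable
qed


lemma psi_eq:
  assumes sol: "mature_sol DM dM DI dI \<tau> p h w" and s: "s \<ge> 0"
  shows "p (s - \<tau> s) * h (w (s - \<tau> s) z) = psi w (s, z)"
proof (cases "s - \<tau> s < 0")
  case True
  then show ?thesis using p_hist[OF s True] unfolding psi_def by simp
next
  case False
  then have "w (s - \<tau> s) z \<ge> 0" using sol_nonneg[OF sol] by simp
  then show ?thesis using False unfolding psi_def wt_def hh_def by simp
qed

lemma Prim_int_DI: "a \<le> b \<Longrightarrow> integral {a..b} DI = Prim DI b - Prim DI a"
  using Prim_integral[OF cont_DI] .
lemma Prim_int_dI: "a \<le> b \<Longrightarrow> integral {a..b} dI = Prim dI b - Prim dI a"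
  using Prim_integral[OF cont_dI] .

lemma tau_le: "s - \<tau> s \<le> s" using signs(5) by (simp add: less_imp_le)

lemma Rop_eq:
  assumes sol: "mature_sol DM dM DI dI \<tau> p h w" and s: "s \<ge> 0"
  shows "Rop DI dI \<tau> p h s (w (s - \<tau> s)) y = (1 - deriv \<tau> s) * Gt w (s, y)"
proof -
  have f: "(\<lambda>z. p (s - \<tau> s) * h (w (s - \<tau> s) z)) = (\<lambda>z. psi w (s, z))"
    using psi_eq[OF sol s] by blast
  have "Gop DI dI s (s - \<tau> s) (\<lambda>z. psi w (s, z)) y = Gt w (s, y)"
    unfolding Gop_unfold Gt_def Ap_def Ep_def using Prim_int_DI[OF tau_le] Prim_int_dI[OF tau_le] by simp
  then show ?thesis unfolding Rop_def f by simp
qed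

lemma Fw_eq:
  assumes sol: "mature_sol DM dM DI dI \<tau> p h w" and s: "s \<ge> 0"
  shows "Fw w s y = Ft w (s, y)"
proof -
  have "w s y \<ge> 0" using sol_nonneg[OF sol] s by simp
  then have "h (w s y) = hh (wt w (s, y))" unfolding hh_def wt_def using s by simp
  then show ?thesis unfolding Fw_def Ft_def using Rop_eq[OF sol s] by simp
qed

lemma gt_eq:
  assumes sol: "mature_sol DM dM DI dI \<tau> p h w" and s: "0 \<le> s" "s \<le> t"
  shows "Gop DI dI t s (Fw w s) x = gt w t x s"
proof -
  have f: "Fw w s = (\<lambda>y. Ft w (s, y))" using Fw_eq[OF sol s(1)] by blast
  show ?thesis unfolding f Gop_unfold gt_def using Prim_int_DI[OF s(2)] Prim_int_dI[OF s(2)] by simp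
qed

lemma Fw_meas:
  assumes sol: "mature_sol DM dM DI dI \<tau> p h w" and s: "s \<ge> 0"
  shows "Fw w s \<in> borel_measurable borel"
proof -
  have [measurable]: "Ft w \<in> borel_measurable (borel \<Otimes>\<^sub>M borel)" using Ft_meas[OF sol] .
  have f: "Fw w s = (\<lambda>y. Ft w (s, y))" using Fw_eq[OF sol s] by blast
  show ?thesis unfolding f by measurable
qed

lemma psi_meas:
  assumes sol: "mature_sol DM dM DI dI \<tau> p h w" and s: "s \<ge> 0"
  shows "(\<lambda>z. p (s - \<tau> s) * h (w (s - \<tau> s) z)) \<in> borel_measurable borel"
proof -
  have [measurable]: "psi w \<in> borel_measurable (borel \<Otimes>\<^sub>M borel)" using cont_meas2[OF psi_cont[OF sol]] .
  have f: "(\<lambda>z. p (s - \<tau> s) * h (w (s - \<tau> s) z)) = (\<lambda>z. psi w (s, z))"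
    using psi_eq[OF sol s] by blast
  show ?thesis unfolding f by measurable
qed

lemma Fw_bound:
  assumes sol: "mature_sol DM dM DI dI \<tau> p h w" and s: "s \<ge> 0"
    and P: "\<forall>t. p t \<le> P" and H: "\<forall>z\<ge>0. h z \<le> H" and K: "\<forall>t. \<bar>1 - deriv \<tau> t\<bar> \<le> K"
  shows "\<bar>Fw w s y\<bar> \<le> P * H + K * (P * H)"
  unfolding Fw_def using F_bound[OF sol s P H K] .

lemma g_integrable:
  assumes sol: "mature_sol DM dM DI dI \<tau> p h w" and t: "t \<ge> 0"
  shows "(\<lambda>s. Gop DI dI t s (Fw w s) x) integrable_on {0..t}"
proof -
  obtain P where P: "\<forall>t. p t \<le> P" using p_max by blast
  obtain H where H: "\<forall>z\<ge>0. h z \<le> H" using h_bound by blast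
  obtain K where K: "\<forall>t. \<bar>1 - deriv \<tau> t\<bar> \<le> K" using dtau_bound by blast
  define MF where "MF = P * H + K * (P * H)"
  have bnd: "\<bar>Gop DI dI t s (Fw w s) x\<bar> \<le> MF" if "s \<in> {0..t}" for s
  proof -
    have "\<forall>y. \<bar>Fw w s y\<bar> \<le> MF" using Fw_bound[OF sol _ P H K] that unfolding MF_def by simp
    then have "\<bar>Gop DI dI t s (Fw w s) x\<bar> \<le> exp (- integral {s..t} dI) * MF" by (rule Gop_bound[OF signs(2)])
    also have "\<dots> \<le> MF"
    proof -
      have "0 \<le> MF" using \<open>\<forall>y. \<bar>Fw w s y\<bar> \<le> MF\<close> by (meson abs_ge_zero order_trans)
      then show ?thesis using E_le1[of s t] by (simp add: mult_left_le_one_le)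
    qed
    finally show ?thesis .
  qed
  have m: "gt w t x \<in> borel_measurable (lebesgue_on {0..t})"
    using measurable_comp[OF id_borel_measurable_lebesgue_on gt_meas[OF sol]] by (simp add: comp_def)
  have "gt w t x integrable_on {0..t}"
  proof (rule measurable_bounded_by_integrable_imp_integrable_real[OF m])
    show "(\<lambda>s. MF) integrable_on {0..t}" by (rule integrable_continuous_interval) (rule continuous_on_const)
    show "\<And>s. s \<in> {0..t} \<Longrightarrow> \<bar>gt w t x s\<bar> \<le> MF" using bnd gt_eq[OF sol] by fastforce
    show "{0..t} \<in> sets lebesgue" by simp
  qed
  then show ?thesis by (rule integrable_eq) (use gt_eq[OF sol] in fastforce)
qed

end

context setting begin

lemma consts_ex: "\<exists>\<delta> Dm tmax P H K. \<delta> > 0 \<and> (\<forall>t. dI t \<ge> \<delta>) \<and> (\<forall>t. DI t \<le> Dm) \<and> (\<forall>t. \<tau> t \<le> tmax)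
   \<and> (\<forall>t. p t \<le> P) \<and> (\<forall>z\<ge>0. h z \<le> H) \<and> (\<forall>t. \<bar>1 - deriv \<tau> t\<bar> \<le> K)
   \<and> Dm \<ge> 0 \<and> tmax \<ge> 0 \<and> P \<ge> 0 \<and> H \<ge> 0 \<and> K \<ge> 0"
proof -
  obtain \<delta> where d: "\<delta> > 0" "\<forall>t. dI t \<ge> \<delta>" using delta_ex by blast
  obtain Dm where Dm: "\<forall>t. DI t \<le> Dm" using Dmax_ex by blast
  obtain tmin tmax where tb: "tmin > 0" "\<forall>t. tmin \<le> \<tau> t \<and> \<tau> t \<le> tmax" using tau_bounds by blast
  obtain P where P: "\<forall>t. p t \<le> P" using p_max by blast
  obtain H where H: "\<forall>z\<ge>0. h z \<le> H" using h_bound by blast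
  obtain K where K: "\<forall>t. \<bar>1 - deriv \<tau> t\<bar> \<le> K" using dtau_bound by blast
  have "Dm \<ge> 0" using Dm[rule_format, of 0] signs(2)[rule_format, of 0] by linarith
  moreover have "tmax \<ge> 0" using tb(1) tb(2)[rule_format, of 0] by linarith
  moreover have "P \<ge> 0" using P[rule_format, of 0] signs(6)[rule_format, of 0] by linarith
  moreover have "H \<ge> 0" using H[rule_format, of 0] h0 by simp
  moreover have "K \<ge> 0" using K[rule_format, of 0] abs_ge_zero[of "1 - deriv \<tau> 0"] by linarith
  ultimately show ?thesis using d Dm tb P H K by blast
qed

lemma Gop_DI_local1:
  assumes Dm: "\<forall>t. DI t \<le> Dm" and st: "s0 \<le> t0"
    and M: "\<forall>y. \<bar>\<phi> y\<bar> \<le> M" and loc: "\<forall>y. \<bar>y - x\<bar> \<le> r \<longrightarrow> \<bar>\<phi> y\<bar> \<le> \<epsilon>" and r: "r > 0"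
  shows "\<bar>Gop DI dI t0 s0 \<phi> x\<bar> \<le> \<epsilon> + 2 * M * (Dm * (t0 - s0)) / r\<^sup>2"
proof -
  have b: "\<bar>Gop DI dI t0 s0 \<phi> x\<bar> \<le> exp (- integral {s0..t0} dI) * (\<epsilon> + 2 * M * integral {s0..t0} DI / r\<^sup>2)"
    using Gop_local[OF signs(2) M loc r] .
  have M0: "M \<ge> 0" using M[rule_format, of 0] abs_ge_zero[of "\<phi> 0"] by linarith
  have "\<bar>\<phi> x\<bar> \<le> \<epsilon>" using loc r by simp
  then have e0: "\<epsilon> \<ge> 0" using abs_ge_zero[of "\<phi> x"] by linarith
  have A0: "0 \<le> integral {s0..t0} DI" using A_nonneg[OF signs(2)] .
  have A1: "integral {s0..t0} DI \<le> Dm * (t0 - s0)" using A_le[OF Dm st] .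
  have X: "0 \<le> \<epsilon> + 2 * M * integral {s0..t0} DI / r\<^sup>2" using e0 M0 A0 by simp
  have "exp (- integral {s0..t0} dI) * (\<epsilon> + 2 * M * integral {s0..t0} DI / r\<^sup>2) \<le> \<epsilon> + 2 * M * integral {s0..t0} DI / r\<^sup>2"
    using E_le1[of s0 t0] X by (simp add: mult_left_le_one_le)
  also have "\<dots> \<le> \<epsilon> + 2 * M * (Dm * (t0 - s0)) / r\<^sup>2"
    using A1 M0 by (simp add: divide_right_mono mult_left_mono)
  finally show ?thesis using b by linarith
qed

lemma Gop_DI_local2:
  assumes d: "\<delta> > 0" "\<forall>t. dI t \<ge> \<delta>" and Dm: "\<forall>t. DI t \<le> Dm" and st: "s0 \<le> t0"
    and M: "\<forall>y. \<bar>\<phi> y\<bar> \<le> M" and loc: "\<forall>y. \<bar>y - x\<bar> \<le> r \<longrightarrow> \<bar>\<phi> y\<bar> \<le> \<epsilon>" and r: "r > 0"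
  shows "\<bar>Gop DI dI t0 s0 \<phi> x\<bar> \<le> exp (- \<delta> * (t0 - s0)) * \<epsilon> + 2 * M * Dm / (\<delta> * r\<^sup>2)"
proof -
  have b: "\<bar>Gop DI dI t0 s0 \<phi> x\<bar> \<le> exp (- integral {s0..t0} dI) * (\<epsilon> + 2 * M * integral {s0..t0} DI / r\<^sup>2)"
    using Gop_local[OF signs(2) M loc r] .
  have M0: "M \<ge> 0" using M[rule_format, of 0] abs_ge_zero[of "\<phi> 0"] by linarith
  have "\<bar>\<phi> x\<bar> \<le> \<epsilon>" using loc r by simp
  then have e0: "\<epsilon> \<ge> 0" using abs_ge_zero[of "\<phi> x"] by linarith
  have Dm0: "Dm \<ge> 0" using Dm[rule_format, of 0] signs(2)[rule_format, of 0] by linarith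
  have A0: "0 \<le> integral {s0..t0} DI" using A_nonneg[OF signs(2)] .
  have A1: "integral {s0..t0} DI \<le> Dm * (t0 - s0)" using A_le[OF Dm st] .
  define q where "q = exp (- \<delta> * (t0 - s0))"
  have q0: "q \<ge> 0" unfolding q_def by simp
  have E1: "exp (- integral {s0..t0} dI) \<le> q" unfolding q_def using E_le_exp[OF d(2) st] .
  have X: "0 \<le> \<epsilon> + 2 * M * integral {s0..t0} DI / r\<^sup>2" using e0 M0 A0 by simp
  have "exp (- integral {s0..t0} dI) * (\<epsilon> + 2 * M * integral {s0..t0} DI / r\<^sup>2) \<le> q * (\<epsilon> + 2 * M * integral {s0..t0} DI / r\<^sup>2)"
    using E1 X by (rule mult_right_mono)
  also have "\<dots> \<le> q * (\<epsilon> + 2 * M * (Dm * (t0 - s0)) / r\<^sup>2)"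
    using A1 M0 q0 by (intro mult_left_mono) (simp_all add: divide_right_mono mult_left_mono)
  also have "\<dots> = q * \<epsilon> + (2 * M * Dm / r\<^sup>2) * (q * (t0 - s0))" by (simp add: algebra_simps)
  also have "\<dots> \<le> q * \<epsilon> + (2 * M * Dm / r\<^sup>2) * (1 / \<delta>)"
  proof -
    have "\<delta> * (q * (t0 - s0)) = (\<delta> * (t0 - s0)) * exp (- (\<delta> * (t0 - s0)))" unfolding q_def by (simp add: algebra_simps)
    also have "\<dots> \<le> 1" using xexp_le[of "\<delta> * (t0 - s0)"] d st by simp
    finally have "q * (t0 - s0) \<le> 1 / \<delta>" using d by (simp add: field_simps)
    moreover have "0 \<le> 2 * M * Dm / r\<^sup>2" using M0 Dm0 by simp
    ultimately have "(2 * M * Dm / r\<^sup>2) * (q * (t0 - s0)) \<le> (2 * M * Dm / r\<^sup>2) * (1 / \<delta>)"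
      by (rule mult_left_mono)
    then show ?thesis by linarith
  qed
  also have "\<dots> = exp (- \<delta> * (t0 - s0)) * \<epsilon> + 2 * M * Dm / (\<delta> * r\<^sup>2)" unfolding q_def by simp
  finally show ?thesis using b by linarith
qed

lemma u_le_Sup_out:
  assumes t: "t \<ge> 0" and y: "c * t \<le> \<bar>y\<bar>"
  shows "u t y \<le> Sup {u t x | x. c * t \<le> \<bar>x\<bar>}"
proof (rule cSup_upper)
  show "u t y \<in> {u t x | x. c * t \<le> \<bar>x\<bar>}" using y by blast
  obtain B where B: "\<forall>x. \<bar>u t x\<bar> \<le> B" using sol_bdd_time[OF u_sol t] by blast
  show "bdd_above {u t x | x. c * t \<le> \<bar>x\<bar>}"
  proof (rule bdd_aboveI[of _ B])
    fix z assume "z \<in> {u t x | x. c * t \<le> \<bar>x\<bar>}"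
    then obtain x where "z = u t x" by blast
    then show "z \<le> B" using B abs_le_D1 by blast
  qed
qed

lemma u_le_Sup_in:
  assumes t: "t \<ge> 0" and y: "\<bar>y\<bar> \<le> c * t"
  shows "\<bar>u t y - ubar t\<bar> \<le> Sup {\<bar>u t x - ubar t\<bar> | x. \<bar>x\<bar> \<le> c * t}"
proof (rule cSup_upper)
  show "\<bar>u t y - ubar t\<bar> \<in> {\<bar>u t x - ubar t\<bar> | x. \<bar>x\<bar> \<le> c * t}" using y by blast
  obtain B where B: "\<forall>x. \<bar>u t x\<bar> \<le> B" using sol_bdd_time[OF u_sol t] by blast
  have "\<forall>x. \<bar>u t x - ubar t\<bar> \<le> B + \<bar>ubar t\<bar>"
  proof
    fix x
    have "\<bar>u t x - ubar t\<bar> \<le> \<bar>u t x\<bar> + \<bar>ubar t\<bar>" by (rule abs_triangle_ineq4)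
    then show "\<bar>u t x - ubar t\<bar> \<le> B + \<bar>ubar t\<bar>" using B[rule_format, of x] by linarith
  qed
  then show "bdd_above {\<bar>u t x - ubar t\<bar> | x. \<bar>x\<bar> \<le> c * t}"
  proof (intro bdd_aboveI[of _ "B + \<bar>ubar t\<bar>"])
    fix z assume "z \<in> {\<bar>u t x - ubar t\<bar> | x. \<bar>x\<bar> \<le> c * t}"
    then obtain x where "z = \<bar>u t x - ubar t\<bar>" by blast
    then show "z \<le> B + \<bar>ubar t\<bar>" using \<open>\<forall>x. \<bar>u t x - ubar t\<bar> \<le> B + \<bar>ubar t\<bar>\<close> by blast
  qed
qed


lemma cT_pos: "cstar / T > 0" using cstar T_pos by simp

lemma h_small: "e > 0 \<Longrightarrow> \<exists>\<eta>>0. \<forall>z. 0 \<le> z \<and> z < \<eta> \<longrightarrow> h z \<le> e"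
proof -
  assume e: "e > 0"
  obtain d where d: "d > 0" "\<forall>z\<in>{0..1}. \<forall>z'\<in>{0..1}. \<bar>z' - z\<bar> < d \<longrightarrow> \<bar>h z' - h z\<bar> < e"
    using h_unif[OF e, of 1] by blast
  define \<eta> where "\<eta> = min 1 (d / 2)"
  have "h z \<le> e" if z: "0 \<le> z" "z < \<eta>" for z
  proof -
    have "z \<in> {0..1}" "(0::real) \<in> {0..1}" "\<bar>z - 0\<bar> < d" using z d(1) unfolding \<eta>_def by auto
    then have "\<bar>h z - h 0\<bar> < e" using d(2) by blast
    then show ?thesis using h0 by simp
  qed
  moreover have "\<eta> > 0" unfolding \<eta>_def using d(1) by simp
  ultimately show ?thesis by blast
qed

lemma F_out_small:
  assumes c1: "cstar / T < c1" and c12: "c1 < c2" and e: "e > 0"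
  shows "\<exists>S\<ge>1. \<forall>s\<ge>S. \<forall>y. c2 * s \<le> \<bar>y\<bar> \<longrightarrow> \<bar>Fw u s y\<bar> \<le> e"
proof -
  obtain \<delta> Dm tmax P H K where cs: "\<delta> > 0" "\<forall>t. dI t \<ge> \<delta>" "\<forall>t. DI t \<le> Dm" "\<forall>t. \<tau> t \<le> tmax"
    "\<forall>t. p t \<le> P" "\<forall>z\<ge>0. h z \<le> H" "\<forall>t. \<bar>1 - deriv \<tau> t\<bar> \<le> K"
    "Dm \<ge> 0" "tmax \<ge> 0" "P \<ge> 0" "H \<ge> 0" "K \<ge> 0"
    using consts_ex by blast
  have c1pos: "c1 > 0" using c1 cT_pos by linarith
  define e1 where "e1 = e / (2 * (P + K * P + 1))"
  have KP: "K * P \<ge> 0" using cs by simp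
  have "P + K * P + 1 > 0" using cs(10) KP by linarith
  then have den: "2 * (P + K * P + 1) > 0" by simp
  have e1: "e1 > 0" unfolding e1_def using e den by simp
  have e1b: "(P + K * P) * e1 \<le> e / 2"
  proof -
    have "(P + K * P) * e1 \<le> (P + K * P + 1) * e1" using e1 by simp
    also have "\<dots> = e / 2" unfolding e1_def using den by (simp add: field_simps)
    finally show ?thesis .
  qed
  obtain \<eta> where eta: "\<eta> > 0" "\<forall>z. 0 \<le> z \<and> z < \<eta> \<longrightarrow> h z \<le> e1" using h_small[OF e1] by blast
  have "eventually (\<lambda>s. dist (Sup {u s x | x. c1 * s \<le> \<bar>x\<bar>}) 0 < \<eta>) at_top"
    using tendstoD[OF u_spread_out[rule_format, OF c1] eta(1)] .
  then obtain S1 where S1: "\<forall>s\<ge>S1. dist (Sup {u s x | x. c1 * s \<le> \<bar>x\<bar>}) 0 < \<eta>"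
    unfolding eventually_at_top_linorder by blast
  define S0 where "S0 = max S1 0"
  have usmall: "h (u s y) \<le> e1" if s: "s \<ge> S0" and y: "c1 * s \<le> \<bar>y\<bar>" for s y
  proof -
    have s0: "s \<ge> 0" "s \<ge> S1" using s unfolding S0_def by auto
    have "u s y \<le> Sup {u s x | x. c1 * s \<le> \<bar>x\<bar>}" using u_le_Sup_out[OF s0(1) y] .
    moreover have "Sup {u s x | x. c1 * s \<le> \<bar>x\<bar>} < \<eta>"
    proof -
      have "\<bar>Sup {u s x | x. c1 * s \<le> \<bar>x\<bar>}\<bar> < \<eta>" using S1 s0(2) by (simp add: dist_real_def)
      then show ?thesis by linarith
    qed
    moreover have "u s y \<ge> 0" using u_nonneg[OF s0(1)] .
    ultimately show ?thesis using eta(2) by simp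
  qed
  define C0 where "C0 = 2 * (P * H) * (Dm * tmax) / (c2 - c1)\<^sup>2"
  have C0: "C0 \<ge> 0" unfolding C0_def using cs by simp
  define S where "S = max (S0 + tmax) (max 1 (2 * K * C0 / e + 1))"
  show ?thesis
  proof (intro exI[of _ S] conjI allI impI)
    show "1 \<le> S" unfolding S_def by simp
    fix s y assume s: "S \<le> s" and y: "c2 * s \<le> \<bar>y\<bar>"
    have s1: "s \<ge> 1" using s unfolding S_def by simp
    have sK: "s \<ge> 2 * K * C0 / e + 1" using s unfolding S_def by simp
    have S00: "S0 \<ge> 0" unfolding S0_def by simp
    have sS0: "s \<ge> S0" using s cs(9) unfolding S_def by simp
    have ts: "\<tau> s \<le> tmax" using cs(4) by blast
    have tpos: "\<tau> s > 0" using signs(5) by blast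
    have sS0': "s - \<tau> s \<ge> S0" using s ts unfolding S_def by simp
    have s0: "s \<ge> 0" "s - \<tau> s \<ge> 0" using sS0 sS0' S00 by linarith+
    have c1y: "c1 * s \<le> \<bar>y\<bar>" using y c12 s0(1) by (smt (verit) mult_right_mono)
    have T1: "\<bar>p s * h (u s y)\<bar> \<le> P * e1"
    proof -
      have "0 \<le> h (u s y)" using h_nonneg u_nonneg[OF s0(1)] by simp
      moreover have "h (u s y) \<le> e1" using usmall[OF sS0 c1y] .
      moreover have "0 \<le> p s" "p s \<le> P" using signs(6) cs(5) by auto
      ultimately show ?thesis by (simp add: abs_mult mult_mono)
    qed
    define \<psi> where "\<psi> = (\<lambda>z. p (s - \<tau> s) * h (u (s - \<tau> s) z))"
    define r where "r = (c2 - c1) * s"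
    have r: "r > 0" unfolding r_def using c12 s1 by simp
    have M\<psi>: "\<forall>z. \<bar>\<psi> z\<bar> \<le> P * H"
    proof
      fix z
      have "0 \<le> h (u (s - \<tau> s) z)" "h (u (s - \<tau> s) z) \<le> H" using h_nonneg cs(6) u_nonneg[OF s0(2)] by auto
      moreover have "0 \<le> p (s - \<tau> s)" "p (s - \<tau> s) \<le> P" using signs(6) cs(5) by auto
      ultimately show "\<bar>\<psi> z\<bar> \<le> P * H" unfolding \<psi>_def by (simp add: abs_mult mult_mono)
    qed
    have loc\<psi>: "\<forall>z. \<bar>z - y\<bar> \<le> r \<longrightarrow> \<bar>\<psi> z\<bar> \<le> P * e1"
    proof (intro allI impI)
      fix z assume z: "\<bar>z - y\<bar> \<le> r"
      have "\<bar>y\<bar> \<le> \<bar>z\<bar> + \<bar>z - y\<bar>" by linarith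
      then have "c1 * s \<le> \<bar>z\<bar>" using y z unfolding r_def by (simp add: algebra_simps)
      moreover have "c1 * (s - \<tau> s) \<le> c1 * s" using c1pos tpos by simp
      ultimately have "c1 * (s - \<tau> s) \<le> \<bar>z\<bar>" by linarith
      then have "h (u (s - \<tau> s) z) \<le> e1" using usmall[OF sS0'] by blast
      moreover have "0 \<le> h (u (s - \<tau> s) z)" using h_nonneg u_nonneg[OF s0(2)] by simp
      moreover have "0 \<le> p (s - \<tau> s)" "p (s - \<tau> s) \<le> P" using signs(6) cs(5) by auto
      ultimately show "\<bar>\<psi> z\<bar> \<le> P * e1" unfolding \<psi>_def by (simp add: abs_mult mult_mono)
    qed
    have G: "\<bar>Gop DI dI s (s - \<tau> s) \<psi> y\<bar> \<le> P * e1 + 2 * (P * H) * (Dm * (s - (s - \<tau> s))) / r\<^sup>2"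
      using Gop_DI_local1[OF cs(3) tau_le M\<psi> loc\<psi> r] .
    have G2: "2 * (P * H) * (Dm * (s - (s - \<tau> s))) / r\<^sup>2 \<le> C0 / s"
    proof -
      have r2: "r\<^sup>2 = (c2 - c1)\<^sup>2 * s\<^sup>2" unfolding r_def by (simp add: power_mult_distrib)
      have "2 * (P * H) * (Dm * (s - (s - \<tau> s))) \<le> 2 * (P * H) * (Dm * tmax)"
        using ts cs by (simp add: mult_left_mono)
      then have "2 * (P * H) * (Dm * (s - (s - \<tau> s))) / r\<^sup>2 \<le> 2 * (P * H) * (Dm * tmax) / r\<^sup>2"
        by (simp add: divide_right_mono)
      also have "\<dots> = C0 / s\<^sup>2" unfolding C0_def r2 using c12 s1 by (simp add: field_simps)
      also have "\<dots> \<le> C0 / s"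
      proof -
        have "s \<le> s\<^sup>2" using s1 by (simp add: power2_eq_square)
        then show ?thesis using C0 s1 by (simp add: frac_le)
      qed
      finally show ?thesis .
    qed
    have R: "\<bar>Rop DI dI \<tau> p h s (u (s - \<tau> s)) y\<bar> \<le> K * (P * e1 + C0 / s)"
    proof -
      have "\<bar>Rop DI dI \<tau> p h s (u (s - \<tau> s)) y\<bar> = \<bar>1 - deriv \<tau> s\<bar> * \<bar>Gop DI dI s (s - \<tau> s) \<psi> y\<bar>"
        unfolding Rop_def \<psi>_def by (simp add: abs_mult)
      also have "\<dots> \<le> K * (P * e1 + C0 / s)"
        using G G2 cs(7) by (intro mult_mono) auto
      finally show ?thesis .
    qed
    have KC: "K * (C0 / s) \<le> e / 2"
    proof -
      have "2 * K * C0 / e \<le> s" using sK by linarith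
      then have "2 * K * C0 \<le> s * e" using e by (simp add: pos_divide_le_eq)
      then show ?thesis using s1 by (simp add: field_simps)
    qed
    have "\<bar>Fw u s y\<bar> \<le> P * e1 + K * (P * e1 + C0 / s)"
      unfolding Fw_def using T1 R by linarith
    also have "\<dots> = (P + K * P) * e1 + K * (C0 / s)" by (simp add: algebra_simps)
    also have "\<dots> \<le> e" using e1b KC by linarith
    finally show "\<bar>Fw u s y\<bar> \<le> e" .
  qed
qed

end

context setting begin

lemma v_eq: "t \<ge> 0 \<Longrightarrow> v t x = Gop DI dI t 0 (v 0) x + integral {0..t} (\<lambda>s. Gop DI dI t s (Fw u s) x)"
proof -
  assume t: "t \<ge> 0"
  have f: "\<And>s. (\<lambda>y. p s * h (u s y) - Rop DI dI \<tau> p h s (u (s - \<tau> s)) y) = Fw u s"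
    unfolding Fw_def by blast
  show ?thesis using v_sol t unfolding f by blast
qed

lemma V0_ex: "\<exists>V0. V0 \<ge> 0 \<and> (\<forall>x. \<bar>v 0 x\<bar> \<le> V0)"
proof -
  obtain a where a: "\<forall>z\<in>range (v 0). norm z \<le> a" using v0_bdd unfolding bounded_iff by blast
  have "\<forall>x. \<bar>v 0 x\<bar> \<le> a" using a by simp
  moreover then have "a \<ge> 0" using abs_ge_zero[of "v 0 0"] by (meson order_trans)
  ultimately show ?thesis by blast
qed

lemma G0_bound:
  assumes d: "\<forall>t. dI t \<ge> \<delta>" and V0: "V0 \<ge> 0" "\<forall>x. \<bar>v 0 x\<bar> \<le> V0" and t: "t \<ge> 0"
  shows "\<bar>Gop DI dI t 0 (v 0) x\<bar> \<le> V0 * exp (- \<delta> * t)"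
proof -
  have "\<bar>Gop DI dI t 0 (v 0) x\<bar> \<le> exp (- integral {0..t} dI) * V0" using Gop_bound[OF signs(2) V0(2)] .
  also have "\<dots> \<le> exp (- \<delta> * (t - 0)) * V0" using E_le_exp[OF d t] V0(1) by (rule mult_right_mono)
  finally show ?thesis by (simp add: mult.commute)
qed

lemma Sup_abs_le:
  fixes X :: "real set"
  assumes ne: "X \<noteq> {}" and b: "\<forall>z\<in>X. \<bar>z\<bar> \<le> B"
  shows "\<bar>Sup X\<bar> \<le> B"
proof -
  have bd: "bdd_above X" using b by (meson abs_le_D1 bdd_aboveI)
  have "Sup X \<le> B" using b ne by (meson abs_le_D1 cSup_least)
  moreover obtain z where z: "z \<in> X" using ne by blast
  then have "z \<le> Sup X" using bd by (rule cSup_upper)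
  moreover have "- B \<le> z" using b z by (meson abs_le_D2 minus_le_iff)
  ultimately show ?thesis by linarith
qed

lemma part1:
  assumes c: "c > cstar / T"
  shows "((\<lambda>t. Sup {v t x | x. c * t \<le> \<bar>x\<bar>}) \<longlongrightarrow> 0) at_top"
proof (rule tendstoI)
  fix e :: real assume e: "e > 0"
  obtain \<delta> Dm tmax P H K where cs: "\<delta> > 0" "\<forall>t. dI t \<ge> \<delta>" "\<forall>t. DI t \<le> Dm" "\<forall>t. \<tau> t \<le> tmax"
    "\<forall>t. p t \<le> P" "\<forall>z\<ge>0. h z \<le> H" "\<forall>t. \<bar>1 - deriv \<tau> t\<bar> \<le> K"
    "Dm \<ge> 0" "tmax \<ge> 0" "P \<ge> 0" "H \<ge> 0" "K \<ge> 0"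
    using consts_ex by blast
  obtain V0 where V0: "V0 \<ge> 0" "\<forall>x. \<bar>v 0 x\<bar> \<le> V0" using V0_ex by blast
  define MF where "MF = P * H + K * (P * H)"
  have MF0: "MF \<ge> 0" unfolding MF_def using cs by simp
  define k where "k = cstar / T"
  have k: "k < c" "0 < k" using c cT_pos unfolding k_def by auto
  define c1 where "c1 = k + (c - k) / 3"
  define c2 where "c2 = k + 2 * (c - k) / 3"
  have c1a': "k < c1" using c1_def k by (simp add: field_simps)
  then have c1a: "cstar / T < c1" unfolding k_def .
  have c1b: "c1 < c2" using c1_def c2_def k by (simp add: field_simps)
  have c1c: "c2 < c" using c2_def k by (simp add: field_simps)
  have c1d: "c2 > 0" using c2_def k by (simp add: field_simps)
  note c1 = c1a c1b c1c c1d
  define e2 where "e2 = \<delta> * e / 2"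
  have e2: "e2 > 0" unfolding e2_def using e cs(1) by simp
  obtain S where S: "S \<ge> 1" "\<forall>s\<ge>S. \<forall>y. c2 * s \<le> \<bar>y\<bar> \<longrightarrow> \<bar>Fw u s y\<bar> \<le> e2"
    using F_out_small[OF c1(1) c1(2) e2] by blast
  define C2 where "C2 = 2 * MF * Dm / (\<delta> * (c - c2)\<^sup>2)"
  define B where "B = (\<lambda>t. e / 2 + (V0 * exp (- \<delta> * t) + C2 / t + (MF * exp (\<delta> * S)) * (t * exp (- \<delta> * t))))"
  have "((\<lambda>t. V0 * exp (- \<delta> * t) + C2 / t + (MF * exp (\<delta> * S)) * (t * exp (- \<delta> * t))) \<longlongrightarrow> 0) at_top"
    using cs(1) by real_asymp
  then have "(B \<longlongrightarrow> e / 2 + 0) at_top" unfolding B_def by (intro tendsto_add tendsto_const)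
  then have Bl: "(B \<longlongrightarrow> e / 2) at_top" by simp
  have ev1: "eventually (\<lambda>t. B t < e) at_top" by (rule order_tendstoD(2)[OF Bl]) (use e in simp)
  have ev2: "eventually (\<lambda>t. t \<ge> S) at_top" by (rule eventually_ge_at_top)
  have main: "\<bar>v t x\<bar> \<le> B t" if t: "t \<ge> S" and x: "c * t \<le> \<bar>x\<bar>" for t x
  proof -
    have t0: "t \<ge> 0" "t \<ge> 1" using t S(1) by auto
    have G0: "\<bar>Gop DI dI t 0 (v 0) x\<bar> \<le> V0 * exp (- \<delta> * t)" using G0_bound[OF cs(2) V0 t0(1)] .
    define cc where "cc = C2 / t\<^sup>2 + MF * exp (- \<delta> * (t - S))"
    have cc0: "cc \<ge> 0" unfolding cc_def C2_def using MF0 cs by simp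
    have gb: "\<bar>Gop DI dI t s (Fw u s) x\<bar> \<le> exp (- \<delta> * (t - s)) * e2 + cc" if s: "s \<in> {0..t}" for s
    proof (cases "s \<ge> S")
      case True
      define r where "r = (c - c2) * t"
      have r: "r > 0" unfolding r_def using c1 t0 by simp
      have M: "\<forall>y. \<bar>Fw u s y\<bar> \<le> MF" using Fw_bound[OF u_sol _ cs(5) cs(6) cs(7)] s unfolding MF_def by simp
      have loc: "\<forall>y. \<bar>y - x\<bar> \<le> r \<longrightarrow> \<bar>Fw u s y\<bar> \<le> e2"
      proof (intro allI impI)
        fix y assume y: "\<bar>y - x\<bar> \<le> r"
        have "\<bar>x\<bar> \<le> \<bar>y\<bar> + \<bar>y - x\<bar>" by linarith
        then have "c2 * t \<le> \<bar>y\<bar>" using x y unfolding r_def by (simp add: algebra_simps)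
        moreover have "c2 * s \<le> c2 * t" using s c1(4) by simp
        ultimately show "\<bar>Fw u s y\<bar> \<le> e2" using S(2) True by force
      qed
      have "\<bar>Gop DI dI t s (Fw u s) x\<bar> \<le> exp (- \<delta> * (t - s)) * e2 + 2 * MF * Dm / (\<delta> * r\<^sup>2)"
        using Gop_DI_local2[OF cs(1) cs(2) cs(3) _ M loc r] s by simp
      also have "2 * MF * Dm / (\<delta> * r\<^sup>2) = C2 / t\<^sup>2"
      proof -
        have r2: "r\<^sup>2 = (c - c2)\<^sup>2 * t\<^sup>2" unfolding r_def by (simp add: power_mult_distrib)
        show ?thesis unfolding C2_def r2 using t0 c1 cs(1) by (simp add: field_simps)
      qed
      finally show ?thesis unfolding cc_def using MF0 by (smt (verit) exp_gt_zero mult_nonneg_nonneg)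
    next
      case False
      have M: "\<forall>y. \<bar>Fw u s y\<bar> \<le> MF" using Fw_bound[OF u_sol _ cs(5) cs(6) cs(7)] s unfolding MF_def by simp
      have "\<bar>Gop DI dI t s (Fw u s) x\<bar> \<le> exp (- integral {s..t} dI) * MF" using Gop_bound[OF signs(2) M] .
      also have "\<dots> \<le> exp (- \<delta> * (t - s)) * MF" using E_le_exp[OF cs(2)] s MF0 by (simp add: mult_right_mono)
      also have "\<dots> \<le> exp (- \<delta> * (t - S)) * MF" using False cs(1) MF0 by (simp add: mult_right_mono)
      finally have "\<bar>Gop DI dI t s (Fw u s) x\<bar> \<le> MF * exp (- \<delta> * (t - S))" by (simp add: mult.commute)
      moreover have "0 \<le> exp (- \<delta> * (t - s)) * e2" using e2 by simp
      moreover have "0 \<le> C2 / t\<^sup>2" unfolding C2_def using MF0 cs by simp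
      ultimately show ?thesis unfolding cc_def by linarith
    qed
    have I: "\<bar>integral {0..t} (\<lambda>s. Gop DI dI t s (Fw u s) x)\<bar> \<le> e2 / \<delta> + cc * t"
      using int_exp_bound[OF cs(1) t0(1) _ cc0 gb] e2 by simp
    have "cc * t = C2 / t + (MF * exp (\<delta> * S)) * (t * exp (- \<delta> * t))"
    proof -
      have "exp (- \<delta> * (t - S)) = exp (\<delta> * S) * exp (- \<delta> * t)" by (simp add: exp_add[symmetric] algebra_simps)
      then show ?thesis unfolding cc_def using t0 by (simp add: field_simps power2_eq_square)
    qed
    moreover have "e2 / \<delta> = e / 2" unfolding e2_def using cs(1) by simp
    ultimately have "\<bar>v t x\<bar> \<le> V0 * exp (- \<delta> * t) + (e / 2 + (C2 / t + (MF * exp (\<delta> * S)) * (t * exp (- \<delta> * t))))"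
      using v_eq[OF t0(1), of x] G0 I by linarith
    then show ?thesis unfolding B_def by linarith
  qed
  show "eventually (\<lambda>t. dist (Sup {v t x | x. c * t \<le> \<bar>x\<bar>}) 0 < e) at_top"
    using ev1 ev2
  proof eventually_elim
    case (elim t)
    have ne: "{v t x | x. c * t \<le> \<bar>x\<bar>} \<noteq> {}"
    proof -
      have "c * t \<le> \<bar>c * t\<bar>" by simp
      then show ?thesis by blast
    qed
    have "\<forall>z\<in>{v t x | x. c * t \<le> \<bar>x\<bar>}. \<bar>z\<bar> \<le> B t" using main elim(2) by blast
    then have "\<bar>Sup {v t x | x. c * t \<le> \<bar>x\<bar>}\<bar> \<le> B t" using Sup_abs_le[OF ne] by blast
    then show ?case using elim(1) by (simp add: dist_real_def)
  qed
qed

end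

context setting begin

lemma ubar_bdd: "\<exists>Ub. \<forall>s. \<bar>ubar s\<bar> \<le> Ub"
proof -
  have bb: "\<forall>t\<ge>0. bounded ((\<lambda>(s, x). ubar s) ` ({0..t} \<times> (UNIV::real set)))"
    using ubar(1) unfolding mature_sol_def by blast
  have "bounded ((\<lambda>(s, x). ubar s) ` ({0..T} \<times> (UNIV::real set)))" using bb T_pos by simp
  then obtain B where B: "\<forall>z\<in>((\<lambda>(s, x). ubar s) ` ({0..T} \<times> (UNIV::real set))). norm z \<le> B" unfolding bounded_iff by blast
  have b: "\<bar>ubar s\<bar> \<le> B" if "s \<in> {0..T}" for s
  proof -
    have "(s, 0) \<in> {0..T} \<times> (UNIV::real set)" using that by simp
    then have "ubar s \<in> ((\<lambda>(s, x). ubar s) ` ({0..T} \<times> (UNIV::real set)))" by force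
    then show ?thesis using B by fastforce
  qed
  have "\<bar>ubar s\<bar> \<le> B" for s
  proof -
    obtain y where "y \<in> {0..T}" "ubar s = ubar y" using periodic_reduce[OF ubar(2) T_pos] by blast
    then show ?thesis using b by simp
  qed
  then show ?thesis by blast
qed

lemma Rop_const: "Rop DI dI \<tau> p h s (\<lambda>y. a) y = Rop DI dI \<tau> p h s (\<lambda>y. a) 0"
  unfolding Rop_def Gop_const by simp

lemma Fw_ub_const: "Fw (\<lambda>t x. ubar t) s = (\<lambda>y. Fw (\<lambda>t x. ubar t) s 0)"
proof
  fix y
  have "Rop DI dI \<tau> p h s (\<lambda>x. ubar (s - \<tau> s)) y = Rop DI dI \<tau> p h s (\<lambda>x. ubar (s - \<tau> s)) 0"
    by (rule Rop_const)
  then show "Fw (\<lambda>t x. ubar t) s y = Fw (\<lambda>t x. ubar t) s 0" unfolding Fw_def by simp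
qed

lemma vbar_eq:
  assumes t: "t \<ge> 0"
  shows "vbar DI dI \<tau> p h ubar t = integral {0..t} (\<lambda>s. Gop DI dI t s (Fw (\<lambda>t x. ubar t) s) x)"
  unfolding vbar_def
proof (rule Henstock_Kurzweil_Integration.integral_cong)
  fix s assume "s \<in> {0..t}"
  have "Gop DI dI t s (Fw (\<lambda>t x. ubar t) s) x = exp (- integral {s..t} dI) * Fw (\<lambda>t x. ubar t) s 0"
    by (subst Fw_ub_const) (rule Gop_const)
  then show "exp (- integral {s..t} dI) * (p s * h (ubar s) - Rop DI dI \<tau> p h s (\<lambda>y. ubar (s - \<tau> s)) 0) =
      Gop DI dI t s (Fw (\<lambda>t x. ubar t) s) x" unfolding Fw_def by simp
qed


lemma F_in_small:
  assumes c21: "c2 < c1" and c1: "c1 < cstar / T" and c2: "0 < c2" and e: "e > 0"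
  shows "\<exists>S\<ge>1. \<forall>s\<ge>S. \<forall>y. \<bar>y\<bar> \<le> c2 * s \<longrightarrow> \<bar>Fw u s y - Fw (\<lambda>t x. ubar t) s 0\<bar> \<le> e"
proof -
  obtain \<delta> Dm tmax P H K where cs: "\<delta> > 0" "\<forall>t. dI t \<ge> \<delta>" "\<forall>t. DI t \<le> Dm" "\<forall>t. \<tau> t \<le> tmax"
    "\<forall>t. p t \<le> P" "\<forall>z\<ge>0. h z \<le> H" "\<forall>t. \<bar>1 - deriv \<tau> t\<bar> \<le> K"
    "Dm \<ge> 0" "tmax \<ge> 0" "P \<ge> 0" "H \<ge> 0" "K \<ge> 0"
    using consts_ex by blast
  obtain Ub where Ub: "\<forall>s. \<bar>ubar s\<bar> \<le> Ub" using ubar_bdd by blast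
  have c1pos: "c1 > 0" using c21 c2 by linarith
  define e1 where "e1 = e / (2 * (P + K * P + 1))"
  have KP: "K * P \<ge> 0" using cs by simp
  have "P + K * P + 1 > 0" using cs(10) KP by linarith
  then have den: "2 * (P + K * P + 1) > 0" by simp
  have e1: "e1 > 0" unfolding e1_def using e den by simp
  have e1b: "(P + K * P) * e1 \<le> e / 2"
  proof -
    have "(P + K * P) * e1 \<le> (P + K * P + 1) * e1" using e1 by simp
    also have "\<dots> = e / 2" unfolding e1_def using den by (simp add: field_simps)
    finally show ?thesis .
  qed
  obtain d where d: "d > 0" "\<forall>z\<in>{0..Ub+1}. \<forall>z'\<in>{0..Ub+1}. \<bar>z' - z\<bar> < d \<longrightarrow> \<bar>h z' - h z\<bar> < e1"
    using h_unif[OF e1, of "Ub + 1"] by blast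
  define \<eta> where "\<eta> = min 1 d"
  have eta: "\<eta> > 0" unfolding \<eta>_def using d(1) by simp
  have close: "\<bar>h z' - h z\<bar> \<le> e1" if z: "0 \<le> z" "z \<le> Ub" "0 \<le> z'" "\<bar>z' - z\<bar> < \<eta>" for z z'
  proof -
    have "\<eta> \<le> 1" "\<eta> \<le> d" unfolding \<eta>_def by auto
    then have "z \<in> {0..Ub+1}" "z' \<in> {0..Ub+1}" "\<bar>z' - z\<bar> < d" using z by auto
    then show ?thesis using d(2) by force
  qed
  have c1': "0 < c1 \<and> c1 < cstar / T" using c1pos c1 by simp
  have "eventually (\<lambda>s. dist (Sup {\<bar>u s x - ubar s\<bar> | x. \<bar>x\<bar> \<le> c1 * s}) 0 < \<eta>) at_top"
    using tendstoD[OF u_spread_in[rule_format, OF c1'] eta] .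
  then obtain S1 where S1: "\<forall>s\<ge>S1. dist (Sup {\<bar>u s x - ubar s\<bar> | x. \<bar>x\<bar> \<le> c1 * s}) 0 < \<eta>"
    unfolding eventually_at_top_linorder by blast
  define S0 where "S0 = max S1 0"
  have uclose: "\<bar>h (u s y) - h (ubar s)\<bar> \<le> e1" if s: "s \<ge> S0" and y: "\<bar>y\<bar> \<le> c1 * s" for s y
  proof -
    have s0: "s \<ge> 0" "s \<ge> S1" using s unfolding S0_def by auto
    have "\<bar>u s y - ubar s\<bar> \<le> Sup {\<bar>u s x - ubar s\<bar> | x. \<bar>x\<bar> \<le> c1 * s}" using u_le_Sup_in[OF s0(1) y] .
    moreover have "Sup {\<bar>u s x - ubar s\<bar> | x. \<bar>x\<bar> \<le> c1 * s} < \<eta>"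
    proof -
      have "\<bar>Sup {\<bar>u s x - ubar s\<bar> | x. \<bar>x\<bar> \<le> c1 * s}\<bar> < \<eta>" using S1 s0(2) by (simp add: dist_real_def)
      then show ?thesis by linarith
    qed
    ultimately have "\<bar>u s y - ubar s\<bar> < \<eta>" by linarith
    moreover have "0 \<le> u s y" using u_nonneg[OF s0(1)] .
    moreover have "0 \<le> ubar s" using ubar_nonneg[OF s0(1)] .
    moreover have "ubar s \<le> Ub" using Ub[rule_format, of s] by linarith
    ultimately show ?thesis using close by blast
  qed
  define C0 where "C0 = 8 * (P * H) * (Dm * tmax) / (c1 - c2)\<^sup>2"
  have C0: "C0 \<ge> 0" unfolding C0_def using cs by simp
  define S where "S = max (S0 + tmax) (max 1 (max (2 * c1 * tmax / (c1 - c2)) (2 * K * C0 / e + 1)))"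
  show ?thesis
  proof (intro exI[of _ S] conjI allI impI)
    show "1 \<le> S" unfolding S_def by simp
    fix s y assume s: "S \<le> s" and y: "\<bar>y\<bar> \<le> c2 * s"
    have s1: "s \<ge> 1" using s unfolding S_def by simp
    have sK: "s \<ge> 2 * K * C0 / e + 1" using s unfolding S_def by simp
    have sc: "s \<ge> 2 * c1 * tmax / (c1 - c2)" using s unfolding S_def by simp
    have S00: "S0 \<ge> 0" unfolding S0_def by simp
    have ts: "\<tau> s \<le> tmax" using cs(4) by blast
    have tpos: "\<tau> s > 0" using signs(5) by blast
    have sS0: "s \<ge> S0" using s cs(9) unfolding S_def by simp
    have sS0': "s - \<tau> s \<ge> S0" using s ts unfolding S_def by simp
    have s0: "s \<ge> 0" "s - \<tau> s \<ge> 0" using sS0 sS0' S00 by linarith+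
    have sT: "c1 * tmax \<le> (c1 - c2) * s / 2"
    proof -
      have "2 * c1 * tmax \<le> s * (c1 - c2)" using sc c21 by (simp add: pos_divide_le_eq)
      then show ?thesis by (simp add: algebra_simps)
    qed
    have y1: "\<bar>y\<bar> \<le> c1 * s" using y c21 s0(1) by (smt (verit) mult_right_mono)
    have T1: "\<bar>p s * h (u s y) - p s * h (ubar s)\<bar> \<le> P * e1"
    proof -
      have "\<bar>p s * h (u s y) - p s * h (ubar s)\<bar> = p s * \<bar>h (u s y) - h (ubar s)\<bar>"
        using signs(6) by (simp add: abs_mult right_diff_distrib[symmetric])
      also have "\<dots> \<le> P * e1"
      proof (rule mult_mono)
        show "p s \<le> P" using cs(5) by blast
        show "\<bar>h (u s y) - h (ubar s)\<bar> \<le> e1" using uclose[OF sS0 y1] .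
      qed (use cs(10) in auto)
      finally show ?thesis .
    qed
    define \<psi> where "\<psi> = (\<lambda>z. p (s - \<tau> s) * h (u (s - \<tau> s) z))"
    define cst where "cst = p (s - \<tau> s) * h (ubar (s - \<tau> s))"
    define r where "r = (c1 - c2) * s / 2"
    have r: "r > 0" unfolding r_def using c21 s1 by simp
    have pr: "0 \<le> p (s - \<tau> s)" "p (s - \<tau> s) \<le> P" using signs(6) cs(5) by auto
    have M\<psi>: "\<forall>z. \<bar>\<psi> z\<bar> \<le> P * H"
    proof
      fix z
      have "0 \<le> h (u (s - \<tau> s) z)" "h (u (s - \<tau> s) z) \<le> H" using h_nonneg cs(6) u_nonneg[OF s0(2)] by auto
      then show "\<bar>\<psi> z\<bar> \<le> P * H" unfolding \<psi>_def using pr by (simp add: abs_mult mult_mono)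
    qed
    have Mdiff: "\<forall>z. \<bar>\<psi> z - cst\<bar> \<le> P * H"
    proof
      fix z
      have a: "0 \<le> \<psi> z" "\<psi> z \<le> P * H"
      proof -
        have "0 \<le> h (u (s - \<tau> s) z)" "h (u (s - \<tau> s) z) \<le> H" using h_nonneg cs(6) u_nonneg[OF s0(2)] by auto
        then show "0 \<le> \<psi> z" "\<psi> z \<le> P * H" unfolding \<psi>_def using pr by (simp_all add: mult_mono)
      qed
      have b: "0 \<le> cst" "cst \<le> P * H"
      proof -
        have "0 \<le> h (ubar (s - \<tau> s))" "h (ubar (s - \<tau> s)) \<le> H" using h_nonneg cs(6) ubar_nonneg[OF s0(2)] by auto
        then show "0 \<le> cst" "cst \<le> P * H" unfolding cst_def using pr by (simp_all add: mult_mono)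
      qed
      show "\<bar>\<psi> z - cst\<bar> \<le> P * H" using a b by linarith
    qed
    have loc: "\<forall>z. \<bar>z - y\<bar> \<le> r \<longrightarrow> \<bar>\<psi> z - cst\<bar> \<le> P * e1"
    proof (intro allI impI)
      fix z assume z: "\<bar>z - y\<bar> \<le> r"
      have "\<bar>z\<bar> \<le> \<bar>y\<bar> + \<bar>z - y\<bar>" by linarith
      then have "\<bar>z\<bar> \<le> c2 * s + (c1 - c2) * s / 2" using y z unfolding r_def by linarith
      also have "\<dots> = c1 * s - (c1 - c2) * s / 2" by (simp add: algebra_simps)
      also have "\<dots> \<le> c1 * s - c1 * \<tau> s"
      proof -
        have "c1 * \<tau> s \<le> c1 * tmax" using ts c1pos by simp
        then show ?thesis using sT by linarith
      qed
      also have "\<dots> = c1 * (s - \<tau> s)" by (simp add: algebra_simps)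
      finally have "\<bar>z\<bar> \<le> c1 * (s - \<tau> s)" .
      then have hz: "\<bar>h (u (s - \<tau> s) z) - h (ubar (s - \<tau> s))\<bar> \<le> e1" using uclose[OF sS0'] by blast
      have "\<bar>\<psi> z - cst\<bar> = p (s - \<tau> s) * \<bar>h (u (s - \<tau> s) z) - h (ubar (s - \<tau> s))\<bar>"
        unfolding \<psi>_def cst_def using pr by (simp add: abs_mult right_diff_distrib[symmetric])
      also have "\<dots> \<le> P * e1" using hz pr e1 by (simp add: mult_mono)
      finally show "\<bar>\<psi> z - cst\<bar> \<le> P * e1" .
    qed
    have \<psi>meas: "\<psi> \<in> borel_measurable borel" unfolding \<psi>_def using psi_meas[OF u_sol s0(1)] .
    have Gd: "Gop DI dI s (s - \<tau> s) \<psi> y - exp (- integral {s - \<tau> s..s} dI) * cst = Gop DI dI s (s - \<tau> s) (\<lambda>z. \<psi> z - cst) y"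
      using Gop_diff_const[OF \<psi>meas M\<psi>] .
    have G: "\<bar>Gop DI dI s (s - \<tau> s) (\<lambda>z. \<psi> z - cst) y\<bar> \<le> P * e1 + 2 * (P * H) * (Dm * (s - (s - \<tau> s))) / r\<^sup>2"
      using Gop_DI_local1[OF cs(3) tau_le Mdiff loc r] .
    have G2: "2 * (P * H) * (Dm * (s - (s - \<tau> s))) / r\<^sup>2 \<le> C0 / s"
    proof -
      have r2: "r\<^sup>2 = (c1 - c2)\<^sup>2 * s\<^sup>2 / 4" unfolding r_def by (simp add: power_mult_distrib power_divide)
      have "2 * (P * H) * (Dm * (s - (s - \<tau> s))) \<le> 2 * (P * H) * (Dm * tmax)"
        using ts cs by (simp add: mult_left_mono)
      then have "2 * (P * H) * (Dm * (s - (s - \<tau> s))) / r\<^sup>2 \<le> 2 * (P * H) * (Dm * tmax) / r\<^sup>2"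
        by (simp add: divide_right_mono)
      also have "\<dots> = C0 / s\<^sup>2" unfolding C0_def r2 using c21 s1 by (simp add: field_simps)
      also have "\<dots> \<le> C0 / s"
      proof -
        have "s \<le> s\<^sup>2" using s1 by (simp add: power2_eq_square)
        then show ?thesis using C0 s1 by (simp add: frac_le)
      qed
      finally show ?thesis .
    qed
    have Rd: "Rop DI dI \<tau> p h s (u (s - \<tau> s)) y - Rop DI dI \<tau> p h s (\<lambda>x. ubar (s - \<tau> s)) 0
        = (1 - deriv \<tau> s) * Gop DI dI s (s - \<tau> s) (\<lambda>z. \<psi> z - cst) y"
    proof -
      have "Rop DI dI \<tau> p h s (\<lambda>x. ubar (s - \<tau> s)) 0 = (1 - deriv \<tau> s) * (exp (- integral {s - \<tau> s..s} dI) * cst)"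
        unfolding Rop_def cst_def Gop_const by simp
      moreover have "Rop DI dI \<tau> p h s (u (s - \<tau> s)) y = (1 - deriv \<tau> s) * Gop DI dI s (s - \<tau> s) \<psi> y"
        unfolding Rop_def \<psi>_def by simp
      ultimately show ?thesis using Gd by (simp add: right_diff_distrib[symmetric])
    qed
    have R: "\<bar>Rop DI dI \<tau> p h s (u (s - \<tau> s)) y - Rop DI dI \<tau> p h s (\<lambda>x. ubar (s - \<tau> s)) 0\<bar> \<le> K * (P * e1 + C0 / s)"
      unfolding Rd abs_mult using G G2 cs(7) by (intro mult_mono) auto
    have KC: "K * (C0 / s) \<le> e / 2"
    proof -
      have "2 * K * C0 / e \<le> s" using sK by linarith
      then have "2 * K * C0 \<le> s * e" using e by (simp add: pos_divide_le_eq)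
      then show ?thesis using s1 by (simp add: field_simps)
    qed
    have "Fw u s y - Fw (\<lambda>t x. ubar t) s 0 = (p s * h (u s y) - p s * h (ubar s))
        - (Rop DI dI \<tau> p h s (u (s - \<tau> s)) y - Rop DI dI \<tau> p h s (\<lambda>x. ubar (s - \<tau> s)) 0)"
      unfolding Fw_def by simp
    then have "\<bar>Fw u s y - Fw (\<lambda>t x. ubar t) s 0\<bar> \<le> P * e1 + K * (P * e1 + C0 / s)"
      using T1 R by linarith
    also have "\<dots> = (P + K * P) * e1 + K * (C0 / s)" by (simp add: algebra_simps)
    also have "\<dots> \<le> e" using e1b KC by linarith
    finally show "\<bar>Fw u s y - Fw (\<lambda>t x. ubar t) s 0\<bar> \<le> e" .
  qed
qed


lemma part2:
  assumes c: "0 < c" "c < cstar / T"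
  shows "((\<lambda>t. Sup {\<bar>v t x - vbar DI dI \<tau> p h ubar t\<bar> | x. \<bar>x\<bar> \<le> c * t}) \<longlongrightarrow> 0) at_top"
proof (rule tendstoI)
  fix e :: real assume e: "e > 0"
  obtain \<delta> Dm tmax P H K where cs: "\<delta> > 0" "\<forall>t. dI t \<ge> \<delta>" "\<forall>t. DI t \<le> Dm" "\<forall>t. \<tau> t \<le> tmax"
    "\<forall>t. p t \<le> P" "\<forall>z\<ge>0. h z \<le> H" "\<forall>t. \<bar>1 - deriv \<tau> t\<bar> \<le> K"
    "Dm \<ge> 0" "tmax \<ge> 0" "P \<ge> 0" "H \<ge> 0" "K \<ge> 0"
    using consts_ex by blast
  obtain V0 where V0: "V0 \<ge> 0" "\<forall>x. \<bar>v 0 x\<bar> \<le> V0" using V0_ex by blast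
  define MF where "MF = P * H + K * (P * H)"
  have MF0: "MF \<ge> 0" unfolding MF_def using cs by simp
  define k where "k = cstar / T"
  have k: "c < k" unfolding k_def using c by simp
  define c1 where "c1 = c + 2 * (k - c) / 3"
  define c2 where "c2 = c + (k - c) / 3"
  have c1a: "c1 < cstar / T" unfolding k_def[symmetric] c1_def using k by (simp add: field_simps)
  have c1b: "c2 < c1" unfolding c1_def c2_def using k by (simp add: field_simps)
  have c1c: "c < c2" unfolding c2_def using k by (simp add: field_simps)
  have c1d: "c2 > 0" using c1c c(1) by linarith
  define e2 where "e2 = \<delta> * e / 2"
  have e2: "e2 > 0" unfolding e2_def using e cs(1) by simp
  obtain S where S: "S \<ge> 1" "\<forall>s\<ge>S. \<forall>y. \<bar>y\<bar> \<le> c2 * s \<longrightarrow> \<bar>Fw u s y - Fw (\<lambda>t x. ubar t) s 0\<bar> \<le> e2"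
    using F_in_small[OF c1b c1a c1d e2] by blast
  define \<theta> where "\<theta> = (c + c2) / (2 * c2)"
  have th: "\<theta> > 0" "\<theta> < 1" unfolding \<theta>_def using c(1) c1c c1d by (simp_all add: field_simps)
  have th2: "c2 * \<theta> = (c + c2) / 2" unfolding \<theta>_def using c1d by (simp add: field_simps)
  define lam where "lam = \<delta> * (1 - \<theta>)"
  have lam: "lam > 0" unfolding lam_def using cs(1) th by simp
  define C2 where "C2 = 2 * (2 * MF) * Dm / (\<delta> * ((c2 - c) / 2)\<^sup>2)"
  define B where "B = (\<lambda>t. e / 2 + (V0 * exp (- \<delta> * t) + C2 / t + (2 * MF) * (t * exp (- lam * t))))"
  have "((\<lambda>t. V0 * exp (- \<delta> * t) + C2 / t + (2 * MF) * (t * exp (- lam * t))) \<longlongrightarrow> 0) at_top"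
    using cs(1) lam by real_asymp
  then have "(B \<longlongrightarrow> e / 2 + 0) at_top" unfolding B_def by (intro tendsto_add tendsto_const)
  then have Bl: "(B \<longlongrightarrow> e / 2) at_top" by simp
  have ev1: "eventually (\<lambda>t. B t < e) at_top" by (rule order_tendstoD(2)[OF Bl]) (use e in simp)
  have ev2: "eventually (\<lambda>t. t \<ge> max 1 (S / \<theta>)) at_top" by (rule eventually_ge_at_top)
  have main: "\<bar>v t x - vbar DI dI \<tau> p h ubar t\<bar> \<le> B t" if t: "t \<ge> max 1 (S / \<theta>)" and x: "\<bar>x\<bar> \<le> c * t" for t x
  proof -
    have t0: "t \<ge> 0" "t \<ge> 1" using t by auto
    have tS: "\<theta> * t \<ge> S" using t th by (simp add: pos_divide_le_eq mult.commute)
    have G0: "\<bar>Gop DI dI t 0 (v 0) x\<bar> \<le> V0 * exp (- \<delta> * t)" using G0_bound[OF cs(2) V0 t0(1)] .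
    define cc where "cc = C2 / t\<^sup>2 + 2 * MF * exp (- lam * t)"
    have cc0: "cc \<ge> 0" unfolding cc_def C2_def using MF0 cs by simp
    have Iu: "(\<lambda>s. Gop DI dI t s (Fw u s) x) integrable_on {0..t}" using g_integrable[OF u_sol t0(1)] .
    have Iub: "(\<lambda>s. Gop DI dI t s (Fw (\<lambda>t x. ubar t) s) x) integrable_on {0..t}" using g_integrable[OF ubar(1) t0(1)] .
    have gb: "\<bar>Gop DI dI t s (Fw u s) x - Gop DI dI t s (Fw (\<lambda>t x. ubar t) s) x\<bar> \<le> exp (- \<delta> * (t - s)) * e2 + cc"
      if s: "s \<in> {0..t}" for s
    proof -
      have s0: "s \<ge> 0" "s \<le> t" using s by auto
      have Mu: "\<forall>y. \<bar>Fw u s y\<bar> \<le> MF" using Fw_bound[OF u_sol s0(1) cs(5) cs(6) cs(7)] unfolding MF_def by simp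
      have Mub: "\<bar>Fw (\<lambda>t x. ubar t) s 0\<bar> \<le> MF" using Fw_bound[OF ubar(1) s0(1) cs(5) cs(6) cs(7)] unfolding MF_def by simp
      have M: "\<forall>y. \<bar>Fw u s y - Fw (\<lambda>t x. ubar t) s 0\<bar> \<le> 2 * MF"
      proof
        fix y show "\<bar>Fw u s y - Fw (\<lambda>t x. ubar t) s 0\<bar> \<le> 2 * MF" using Mu[rule_format, of y] Mub by linarith
      qed
      have eq1: "Gop DI dI t s (Fw (\<lambda>t x. ubar t) s) x = exp (- integral {s..t} dI) * Fw (\<lambda>t x. ubar t) s 0"
        by (subst Fw_ub_const) (rule Gop_const)
      have eq2: "Gop DI dI t s (Fw u s) x - exp (- integral {s..t} dI) * Fw (\<lambda>t x. ubar t) s 0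
          = Gop DI dI t s (\<lambda>y. Fw u s y - Fw (\<lambda>t x. ubar t) s 0) x"
        using Gop_diff_const[OF Fw_meas[OF u_sol s0(1)] Mu] .
      have "\<bar>Gop DI dI t s (\<lambda>y. Fw u s y - Fw (\<lambda>t x. ubar t) s 0) x\<bar> \<le> exp (- \<delta> * (t - s)) * e2 + cc"
      proof (cases "s \<ge> \<theta> * t")
        case True
        have sS: "s \<ge> S" using True tS by linarith
        define r where "r = (c2 - c) * t / 2"
        have r: "r > 0" unfolding r_def using c1c t0 by simp
        have loc: "\<forall>y. \<bar>y - x\<bar> \<le> r \<longrightarrow> \<bar>Fw u s y - Fw (\<lambda>t x. ubar t) s 0\<bar> \<le> e2"
        proof (intro allI impI)
          fix y assume y: "\<bar>y - x\<bar> \<le> r"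
          have "\<bar>y\<bar> \<le> \<bar>x\<bar> + \<bar>y - x\<bar>" by linarith
          then have "\<bar>y\<bar> \<le> c * t + (c2 - c) * t / 2" using x y unfolding r_def by linarith
          also have "\<dots> = ((c + c2) / 2) * t" by (simp add: field_simps)
          also have "\<dots> = c2 * \<theta> * t" using th2 by simp
          also have "\<dots> \<le> c2 * s" using True c1d by (simp add: mult.assoc)
          finally show "\<bar>Fw u s y - Fw (\<lambda>t x. ubar t) s 0\<bar> \<le> e2" using S(2) sS by blast
        qed
        have "\<bar>Gop DI dI t s (\<lambda>y. Fw u s y - Fw (\<lambda>t x. ubar t) s 0) x\<bar> \<le> exp (- \<delta> * (t - s)) * e2 + 2 * (2 * MF) * Dm / (\<delta> * r\<^sup>2)"
          using Gop_DI_local2[OF cs(1) cs(2) cs(3) s0(2) M loc r] .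
        also have "2 * (2 * MF) * Dm / (\<delta> * r\<^sup>2) = C2 / t\<^sup>2"
        proof -
          have r2: "r\<^sup>2 = ((c2 - c) / 2)\<^sup>2 * t\<^sup>2" unfolding r_def by (simp add: power_mult_distrib power_divide)
          show ?thesis unfolding C2_def r2 using t0 c1c cs(1) by (simp add: field_simps)
        qed
        finally show ?thesis unfolding cc_def using MF0 by (smt (verit) exp_gt_zero mult_nonneg_nonneg)
      next
        case False
        have "\<bar>Gop DI dI t s (\<lambda>y. Fw u s y - Fw (\<lambda>t x. ubar t) s 0) x\<bar> \<le> exp (- integral {s..t} dI) * (2 * MF)"
          using Gop_bound[OF signs(2) M] .
        also have "\<dots> \<le> exp (- \<delta> * (t - s)) * (2 * MF)" using E_le_exp[OF cs(2) s0(2)] MF0 by (simp add: mult_right_mono)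
        also have "\<dots> \<le> exp (- lam * t) * (2 * MF)"
        proof -
          have "- \<delta> * (t - s) \<le> - lam * t" unfolding lam_def using False cs(1) by (simp add: algebra_simps)
          then show ?thesis using MF0 by (simp add: mult_right_mono)
        qed
        finally have "\<bar>Gop DI dI t s (\<lambda>y. Fw u s y - Fw (\<lambda>t x. ubar t) s 0) x\<bar> \<le> 2 * MF * exp (- lam * t)" by (simp add: mult.commute)
        moreover have "0 \<le> exp (- \<delta> * (t - s)) * e2" using e2 by simp
        moreover have "0 \<le> C2 / t\<^sup>2" unfolding C2_def using MF0 cs by simp
        ultimately show ?thesis unfolding cc_def by linarith
      qed
      then show ?thesis using eq1 eq2 by simp
    qed
    have "integral {0..t} (\<lambda>s. Gop DI dI t s (Fw u s) x) - integral {0..t} (\<lambda>s. Gop DI dI t s (Fw (\<lambda>t x. ubar t) s) x)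
        = integral {0..t} (\<lambda>s. Gop DI dI t s (Fw u s) x - Gop DI dI t s (Fw (\<lambda>t x. ubar t) s) x)"
      using Henstock_Kurzweil_Integration.integral_diff[OF Iu Iub] by simp
    moreover have I: "\<bar>integral {0..t} (\<lambda>s. Gop DI dI t s (Fw u s) x - Gop DI dI t s (Fw (\<lambda>t x. ubar t) s) x)\<bar> \<le> e2 / \<delta> + cc * t"
      using int_exp_bound[OF cs(1) t0(1) _ cc0 gb] e2 by simp
    moreover have "cc * t = C2 / t + (2 * MF) * (t * exp (- lam * t))"
      unfolding cc_def using t0 by (simp add: field_simps power2_eq_square)
    moreover have "e2 / \<delta> = e / 2" unfolding e2_def using cs(1) by simp
    ultimately have "\<bar>v t x - vbar DI dI \<tau> p h ubar t\<bar> \<le> V0 * exp (- \<delta> * t) + (e / 2 + (C2 / t + (2 * MF) * (t * exp (- lam * t))))"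
      using v_eq[OF t0(1), of x] vbar_eq[OF t0(1), of x] G0 by linarith
    then show ?thesis unfolding B_def by linarith
  qed
  show "eventually (\<lambda>t. dist (Sup {\<bar>v t x - vbar DI dI \<tau> p h ubar t\<bar> | x. \<bar>x\<bar> \<le> c * t}) 0 < e) at_top"
    using ev1 ev2
  proof eventually_elim
    case (elim t)
    have ne: "{\<bar>v t x - vbar DI dI \<tau> p h ubar t\<bar> | x. \<bar>x\<bar> \<le> c * t} \<noteq> {}"
    proof -
      have "\<bar>0::real\<bar> \<le> c * t" using elim(2) c(1) by simp
      then show ?thesis by blast
    qed
    have "\<forall>z\<in>{\<bar>v t x - vbar DI dI \<tau> p h ubar t\<bar> | x. \<bar>x\<bar> \<le> c * t}. \<bar>z\<bar> \<le> B t" using main elim(2) by auto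
    then have "\<bar>Sup {\<bar>v t x - vbar DI dI \<tau> p h ubar t\<bar> | x. \<bar>x\<bar> \<le> c * t}\<bar> \<le> B t" using Sup_abs_le[OF ne] by blast
    then show ?case using elim(1) by (simp add: dist_real_def)
  qed
qed

end

theorem theorem5p4:
  fixes T \<alpha> \<beta> t\<alpha> t\<beta> zs ustar cstar :: real
    and DM DI dM dI \<tau> p h h' ubar :: "real \<Rightarrow> real"
    and u v :: "real \<Rightarrow> real \<Rightarrow> real"
  assumes T_pos: "T > 0"
    and C1_coeffs: "C1 DM" "C1 DI" "C1 dM" "C1 dI" "C1 \<tau>" "C1 p"
    and periodic: "periodic_with T DM" "periodic_with T DI" "periodic_with T dM"
        "periodic_with T dI" "periodic_with T \<tau>" "periodic_with T p"
    and signs: "\<forall>t. DM t \<ge> 0" "\<forall>t. DI t \<ge> 0" "\<forall>t. dM t > 0" "\<forall>t. dI t > 0"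
        "\<forall>t. \<tau> t > 0" "\<forall>t. p t \<ge> 0"
    and h_C1: "continuous_on {0..} h'" "\<forall>z\<ge>0. (h has_real_derivative h' z) (at z within {0..})"
    and h_nonneg: "\<forall>z\<ge>0. h z \<ge> 0"
    and times: "0 < \<alpha>" "\<alpha> \<le> \<beta>" "\<beta> < t\<alpha>" "t\<alpha> \<le> t\<beta>" "t\<beta> < T"
        "t\<alpha> - \<tau> t\<alpha> = \<alpha>" "t\<beta> - \<tau> t\<beta> = \<beta>"
    and p_zero: "\<forall>t\<in>{0..\<alpha>} \<union> {\<beta>..T}. p t = 0"
    and tau_deriv: "\<forall>t. deriv \<tau> t < 1"
    and h0: "h 0 = 0"
    and h_lim: "(h \<longlongrightarrow> 0) at_top"
    and zs: "zs \<ge> 0"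
    and h_incr: "\<forall>x y. 0 \<le> x \<and> x < y \<and> y < zs \<longrightarrow> h x < h y"
    and h_decr: "\<forall>x y. zs \<le> x \<and> x < y \<longrightarrow> h y < h x"
    and h_subhom: "\<forall>l z. 0 < l \<and> l < 1 \<and> 0 \<le> z \<longrightarrow> h (l * z) \<ge> l * h z"
    and L_gt1: "Lconst T dM dI \<tau> p (h' 0) t\<alpha> t\<beta> > 1"
    and ustar: "ustar > 0" "Qc T DM dM DI dI \<tau> p h ustar = ustar"
        "\<forall>z. z > 0 \<and> Qc T DM dM DI dI \<tau> p h z = z \<longrightarrow> ustar \<le> z"
    and h_mono_ustar: "mono_on {0..ustar} h"
    and ubar: "mature_sol DM dM DI dI \<tau> p h (\<lambda>t x. ubar t)" "ubar 0 = ustar"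
        "periodic_with T ubar"
    and cstar: "cstar > 0"
    and u_sol: "mature_sol DM dM DI dI \<tau> p h u"
    and u_spread_out: "\<forall>c > cstar / T.
        ((\<lambda>t. Sup {u t x | x. c * t \<le> \<bar>x\<bar>}) \<longlongrightarrow> 0) at_top"
    and u_spread_in: "\<forall>c. 0 < c \<and> c < cstar / T \<longrightarrow>
        ((\<lambda>t. Sup {\<bar>u t x - ubar t\<bar> | x. \<bar>x\<bar> \<le> c * t}) \<longlongrightarrow> 0) at_top"
    and v0_bdd: "bounded (range (v 0))"
    and v0_meas: "v 0 \<in> borel_measurable borel"
    and v_sol: "\<forall>t\<ge>0. \<forall>x. v t x = Gop DI dI t 0 (v 0) x
        + integral {0..t} (\<lambda>s. Gop DI dI t s
            (\<lambda>y. p s * h (u s y) - Rop DI dI \<tau> p h s (u (s - \<tau> s)) y) x)"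
  shows "(\<forall>c > cstar / T.
           ((\<lambda>t. Sup {v t x | x. c * t \<le> \<bar>x\<bar>}) \<longlongrightarrow> 0) at_top) \<and>
         (\<forall>c. 0 < c \<and> c < cstar / T \<longrightarrow>
           ((\<lambda>t. Sup {\<bar>v t x - vbar DI dI \<tau> p h ubar t\<bar> | x. \<bar>x\<bar> \<le> c * t}) \<longlongrightarrow> 0) at_top)"
proof -
  have L: "setting T \<alpha> \<beta> t\<alpha> t\<beta> cstar DM DI dM dI \<tau> p h h' ubar u v"
    unfolding setting_def by (intro conjI; fact)
  show ?thesis using setting.part1[OF L] setting.part2[OF L] by blast
qed

end
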